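(* Let $G$ be a topological gyrogroup. Then the map $i_G:G\to G^{\bullet}$, $i_G(x)=x^{\bullet}$ where $x^{\bullet}(r)=x$ for all $r\in J$, is an injective groupoid homomorphism which is a homeomorphism onto its image, and $i_G(G)$ is a closed subgyrogroup of the pathwise connected, locally pathwise connected topological gyrogroup $G^{\bullet}$.
   Context: A gyrogroup is a set $G$ with a binary operation $\oplus$ such that: (G1) there is a unique identity $0$ with $0\oplus a=a=a\oplus 0$; (G2) each $x$ has a unique inverse $\ominus x$ with $\ominus x\oplus x=0=x\oplus(\ominus x)$; (G3) for all $x,y$ there is an automorphism $\mathrm{gyr}[x,y]$ of $(G,\oplus)$ with $x\oplus(y\oplus z)=(x\oplus y)\oplus \mathrm{gyr}[x,y](z)$ for all $z$; (G4) $\mathrm{gyr}[x\oplus y,y]=\mathrm{gyr}[x,y]$. A topological gyrogroup is a gyrogroup with a topology (all spaces are assumed $T_1$) such that $\oplus$ is jointly continuous and $x\mapsto\ominus x$ is continuous. A subgyrogroup of $G$ is a nonempty $H\subseteq G$ that is a gyrogroup under the inherited operation and such that for all $a,b\in H$ the restriction of $\mathrm{gyr}[a,b]$ to $H$ is an automorphism of $H$. A groupoid homomorphism is a map $\varphi$ with $\varphi(x\oplus y)=\varphi(x)\oplus\varphi(y)$. Construction: let $J=[0,1)$ and let $G^{\bullet}$ be the set of all functions $f:J\to G$ for which there exist $0=a_0<a_1<\dots<a_n=1$ with $f$ constant on each $[a_k,a_{k+1})$, with pointwise operation $(f\oplus^{\bullet}g)(r)=f(r)\oplus g(r)$ (a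 gyrogroup with identity $\mathbf{0}^{\bullet}\equiv0$). For an open neighbourhood $V$ of $0$ in $G$ and $\varepsilon>0$ let $O(V,\varepsilon)=\{f\in G^{\bullet}:\mu(\{r\in J: f(r)\notin V\})<\varepsilon\}$, $\mu$ Lebesgue measure. $G^{\bullet}$ carries the (Hausdorff) topological gyrogroup topology in which the sets $f\oplus^{\bullet}O(V,\varepsilon)$ form a local base at each $f\in G^{\bullet}$. *)

theory Defs
  imports "HOL-Analysis.Analysis"
begin

definition gzero :: "'a set \<Rightarrow> ('a \<Rightarrow> 'a \<Rightarrow> 'a) \<Rightarrow> 'a" where
  "gzero G op = (THE e. e \<in> G \<and> (\<forall>a\<in>G. op e a = a \<and> op a e = a))"

definition ginv :: "'a set \<Rightarrow> ('a \<Rightarrow> 'a \<Rightarrow> 'a) \<Rightarrow> 'a \<Rightarrow> 'a" where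
  "ginv G op x = (THE y. y \<in> G \<and> op y x = gzero G op \<and> op x y = gzero G op)"

definition gyro_automorphism :: "'a set \<Rightarrow> ('a \<Rightarrow> 'a \<Rightarrow> 'a) \<Rightarrow> ('a \<Rightarrow> 'a) \<Rightarrow> bool" where
  "gyro_automorphism G op h \<longleftrightarrow>
     bij_betw h G G \<and> (\<forall>a\<in>G. \<forall>b\<in>G. h (op a b) = op (h a) (h b))"

definition gyrogroup_with :: "'a set \<Rightarrow> ('a \<Rightarrow> 'a \<Rightarrow> 'a) \<Rightarrow> ('a \<Rightarrow> 'a \<Rightarrow> 'a \<Rightarrow> 'a) \<Rightarrow> bool" where
  "gyrogroup_with G op gyr \<longleftrightarrow>
     (\<forall>x\<in>G. \<forall>y\<in>G. op x y \<in> G) \<and>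
     (\<exists>!e. e \<in> G \<and> (\<forall>a\<in>G. op e a = a \<and> op a e = a)) \<and>
     (\<forall>x\<in>G. \<exists>!y. y \<in> G \<and> op y x = gzero G op \<and> op x y = gzero G op) \<and>
     (\<forall>x\<in>G. \<forall>y\<in>G. gyro_automorphism G op (gyr x y)) \<and>
     (\<forall>x\<in>G. \<forall>y\<in>G. \<forall>z\<in>G. op x (op y z) = op (op x y) (gyr x y z)) \<and>
     (\<forall>x\<in>G. \<forall>y\<in>G. \<forall>z\<in>G. gyr (op x y) y z = gyr x y z)"

definition gyrogroup :: "'a set \<Rightarrow> ('a \<Rightarrow> 'a \<Rightarrow> 'a) \<Rightarrow> bool" where
  "gyrogroup G op \<longleftrightarrow> (\<exists>gyr. gyrogroup_with G op gyr)"

text \<open>Subgyrogroup: nonempty subset, gyrogroup under the inherited operation,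
  and the gyroautomorphisms gyr[a,b] (a,b in H) of G restrict to automorphisms of H.
  (The gyroautomorphisms of a gyrogroup are uniquely determined by (G3) by left
  cancellation; we quantify over all witnessing families.)\<close>
definition subgyrogroup :: "'a set \<Rightarrow> 'a set \<Rightarrow> ('a \<Rightarrow> 'a \<Rightarrow> 'a) \<Rightarrow> bool" where
  "subgyrogroup H G op \<longleftrightarrow>
     H \<noteq> {} \<and> H \<subseteq> G \<and> gyrogroup H op \<and>
     (\<forall>gyr. gyrogroup_with G op gyr \<longrightarrow>
        (\<forall>a\<in>H. \<forall>b\<in>H. gyro_automorphism H op (gyr a b)))"

definition topological_gyrogroup :: "'a set \<Rightarrow> ('a \<Rightarrow> 'a \<Rightarrow> 'a) \<Rightarrow> 'a topology \<Rightarrow> bool" where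
  "topological_gyrogroup G op X \<longleftrightarrow>
     gyrogroup G op \<and> topspace X = G \<and> t1_space X \<and>
     continuous_map (prod_topology X X) X (\<lambda>p. op (fst p) (snd p)) \<and>
     continuous_map X X (ginv G op)"

abbreviation J :: "real set" where "J \<equiv> {0..<1}"

definition bullet_carrier :: "'a set \<Rightarrow> (real \<Rightarrow> 'a) set" where
  "bullet_carrier G = {f. (\<forall>r. r \<notin> J \<longrightarrow> f r = undefined) \<and> (\<forall>r\<in>J. f r \<in> G) \<and>
      (\<exists>(a::nat \<Rightarrow> real) n. a 0 = 0 \<and> a n = 1 \<and> (\<forall>k<n. a k < a (Suc k)) \<and>
         (\<forall>k<n. \<forall>r\<in>{a k..<a (Suc k)}. f r = f (a k)))}"

definition bullet_op :: "('a \<Rightarrow> 'a \<Rightarrow> 'a) \<Rightarrow> (real \<Rightarrow> 'a) \<Rightarrow> (real \<Rightarrow> 'a) \<Rightarrow> (real \<Rightarrow> 'a)" where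
  "bullet_op op f g = (\<lambda>r. if r \<in> J then op (f r) (g r) else undefined)"

definition bullet_O :: "'a set \<Rightarrow> ('a \<Rightarrow> 'a \<Rightarrow> 'a) \<Rightarrow> 'a set \<Rightarrow> real \<Rightarrow> (real \<Rightarrow> 'a) set" where
  "bullet_O G op V \<epsilon> = {f \<in> bullet_carrier G. measure lebesgue {r \<in> J. f r \<notin> V} < \<epsilon>}"

definition bullet_topology :: "'a set \<Rightarrow> ('a \<Rightarrow> 'a \<Rightarrow> 'a) \<Rightarrow> 'a topology \<Rightarrow> (real \<Rightarrow> 'a) topology" where
  "bullet_topology G op X = topology (\<lambda>U. U \<subseteq> bullet_carrier G \<and>
     (\<forall>f\<in>U. \<exists>V \<epsilon>. openin X V \<and> gzero G op \<in> V \<and> \<epsilon> > 0 \<and>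
        bullet_op op f ` bullet_O G op V \<epsilon> \<subseteq> U))"

definition const_bullet :: "'a \<Rightarrow> (real \<Rightarrow> 'a)" where
  "const_bullet x = (\<lambda>r. if r \<in> J then x else undefined)"

end

theory Submission
  imports Defs
begin


definition stepD :: "(real \<Rightarrow> 'b) \<Rightarrow> bool" where
  "stepD f \<longleftrightarrow> (\<exists>D. finite D \<and> (\<forall>r s. 0 \<le> r \<and> r \<le> s \<and> s < 1 \<and> (\<forall>d\<in>D. \<not>(r<d \<and> d\<le>s)) \<longrightarrow> f r = f s))"

definition ispart :: "(nat \<Rightarrow> real) \<Rightarrow> nat \<Rightarrow> bool" where
  "ispart a n \<longleftrightarrow> a 0 = 0 \<and> a n = 1 \<and> (\<forall>k<n. a k < a (Suc k))"

lemma part_mono: assumes "ispart a n" shows "j \<le> k \<Longrightarrow> k \<le> n \<Longrightarrow> a j \<le> a k"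
proof (induction k)
  case 0 then show ?case by simp
next
  case (Suc k)
  show ?case
  proof (cases "j = Suc k")
    case False
    then have "a j \<le> a k" using Suc by simp
    also have "a k < a (Suc k)" using assms Suc.prems by (simp add: ispart_def)
    finally show ?thesis by simp
  qed simp
qed

lemma part_bounds: assumes "ispart a n" "k \<le> n" shows "0 \<le> a k" "a k \<le> 1"
  using part_mono[OF assms(1), of 0 k] part_mono[OF assms(1), of k n] assms
  by (auto simp: ispart_def)

lemma part_cover:
  assumes "ispart a n" "r \<in> J" shows "\<exists>k<n. a k \<le> r \<and> r < a (Suc k)"
proof -
  have "\<And>m. m \<le> n \<Longrightarrow> r < a m \<Longrightarrow> \<exists>k<m. a k \<le> r \<and> r < a (Suc k)"
  proof -
    fix m show "m \<le> n \<Longrightarrow> r < a m \<Longrightarrow> \<exists>k<m. a k \<le> r \<and> r < a (Suc k)"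
    proof (induction m)
      case 0 then show ?case using assms by (simp add: ispart_def)
    next
      case (Suc m)
      show ?case
      proof (cases "r < a m")
        case True then show ?thesis using Suc by (metis Suc_leD less_SucI)
      next
        case False then show ?thesis using Suc by auto
      qed
    qed
  qed
  then show ?thesis using assms by (simp add: ispart_def)
qed

lemma stepD_of_part:
  assumes "ispart a n" "\<forall>k<n. \<forall>r\<in>{a k..<a (Suc k)}. f r = f (a k)"
  shows "stepD f"
  unfolding stepD_def
proof (intro exI[of _ "a ` {..n}"] conjI allI impI)
  show "finite (a ` {..n})" by simp
  fix r s :: real assume h: "0 \<le> r \<and> r \<le> s \<and> s < 1 \<and> (\<forall>d\<in>a ` {..n}. \<not> (r < d \<and> d \<le> s))"
  then have "r \<in> J" by simp
  from part_cover[OF assms(1) this] obtain k where k: "k < n" "a k \<le> r" "r < a (Suc k)" by blast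
  have "s < a (Suc k)"
  proof (rule ccontr)
    assume "\<not> s < a (Suc k)"
    then have "a (Suc k) \<in> a ` {..n} \<and> r < a (Suc k) \<and> a (Suc k) \<le> s" using k by auto
    then show False using h by blast
  qed
  then have rs: "r \<in> {a k..<a (Suc k)}" "s \<in> {a k..<a (Suc k)}" using k h by auto
  from assms(2) k(1) have "\<forall>r\<in>{a k..<a (Suc k)}. f r = f (a k)" by blast
  then have "f r = f (a k)" "f s = f (a k)" using rs by (meson bspec)+
  then show "f r = f s" by simp
qed

lemma part_of_stepD:
  assumes "stepD f"
  shows "\<exists>a n. ispart a n \<and> (\<forall>k<n. \<forall>r\<in>{a k..<a (Suc k)}. f r = f (a k))"
proof -
  obtain D where D: "finite D" "\<forall>r s. 0 \<le> r \<and> r \<le> s \<and> s < 1 \<and> (\<forall>d\<in>D. \<not>(r<d \<and> d\<le>s)) \<longrightarrow> f r = f s"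
    using assms by (auto simp: stepD_def)
  define P where "P = insert 0 (insert (1::real) (D \<inter> {0<..<1}))"
  have finP: "finite P" using D(1) by (simp add: P_def)
  define L where "L = sorted_list_of_set P"
  have setL: "set L = P" using finP by (simp add: L_def)
  have strict: "sorted_wrt (<) L" by (simp add: L_def strict_sorted_list_of_set)
  have sortedL: "sorted L" by (simp add: L_def)
  have lenL: "length L = card P" by (simp add: L_def)
  have "card {0::real,1} \<le> card P" by (rule card_mono[OF finP]) (auto simp: P_def)
  then have len2: "length L \<ge> 2" using lenL by simp
  define n where "n = length L - 1"
  have P01: "\<forall>x\<in>P. 0 \<le> x \<and> x \<le> 1" by (auto simp: P_def)
  have a0: "L ! 0 = 0"
  proof -
    have "(0::real) \<in> set L" using setL by (simp add: P_def)
    then obtain j where j: "j < length L" "L ! j = 0" by (auto simp: in_set_conv_nth)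
    have "L ! 0 \<le> L ! j" using sorted_nth_mono[OF sortedL, of 0 j] j by simp
    moreover have "L ! 0 \<in> P" proof - have "0 < length L" using len2 by linarith from nth_mem[OF this] setL show ?thesis by simp qed
    ultimately show ?thesis using j P01 by force
  qed
  have an: "L ! n = 1"
  proof -
    have "(1::real) \<in> set L" using setL by (simp add: P_def)
    then obtain j where j: "j < length L" "L ! j = 1" by (auto simp: in_set_conv_nth)
    have "L ! j \<le> L ! n" using sorted_nth_mono[OF sortedL, of j n] j by (simp add: n_def)
    moreover have "L ! n \<in> P" proof - have "n < length L" using len2 unfolding n_def by linarith from nth_mem[OF this] setL show ?thesis by simp qed
    ultimately show ?thesis using j P01 by force
  qed
  have sinc: "\<forall>k<n. L ! k < L ! (Suc k)"
    using sorted_wrt_nth_less[OF strict] by (simp add: n_def)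
  have p1: "ispart ((!) L) n" using a0 an sinc by (simp add: ispart_def)
  have p2: "\<forall>k<n. \<forall>r\<in>{L ! k..<L ! (Suc k)}. f r = f (L ! k)"
  proof (intro allI impI ballI)
    fix k r assume k: "k < n" and r: "r \<in> {L ! k..<L ! (Suc k)}"
    have kl: "Suc k < length L" using k n_def len2 by simp
    have "k < length L" using kl by simp
    from nth_mem[OF this] nth_mem[OF kl] setL have Lk: "L ! k \<in> P" "L ! Suc k \<in> P" by simp_all
    have nod: "\<forall>d\<in>D. \<not>(L ! k < d \<and> d \<le> r)"
    proof (intro ballI notI)
      fix d assume dD: "d \<in> D" and dd: "L ! k < d \<and> d \<le> r"
      have "0 < d" "d < 1" using dd r Lk P01 by fastforce+
      then have "d \<in> set L" using setL dD by (simp add: P_def)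
      then obtain j where j: "j < length L" "L ! j = d" by (auto simp: in_set_conv_nth)
      show False
      proof (cases "j \<le> k")
        case True then have "L ! j \<le> L ! k" using sorted_nth_mono[OF sortedL, of j k] j kl by simp
        then show ?thesis using j dd by simp
      next
        case False then have "Suc k \<le> j" by simp
        then show ?thesis using sorted_nth_mono[OF sortedL, of "Suc k" j] j dd r by auto
      qed
    qed
    have "0 \<le> L ! k" "L ! Suc k \<le> 1" using Lk P01 by auto
    then have c: "0 \<le> L ! k \<and> L ! k \<le> r \<and> r < 1 \<and> (\<forall>d\<in>D. \<not>(L ! k<d \<and> d\<le>r))" using r nod by auto
    have "f (L ! k) = f r" using D(2)[rule_format, OF c] .
    then show "f r = f (L ! k)" by simp
  qed
  show ?thesis apply (rule exI[of _ "(!) L"], rule exI[of _ n]) using p1 p2 by (rule conjI)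
qed

lemma stepD_comp3:
  assumes "stepD f" "stepD g" "stepD h"
  shows "stepD (\<lambda>r. F (f r) (g r) (h r))"
proof -
  obtain D1 where D1: "finite D1" "\<forall>r s. 0 \<le> r \<and> r \<le> s \<and> s < 1 \<and> (\<forall>d\<in>D1. \<not>(r<d \<and> d\<le>s)) \<longrightarrow> f r = f s"
    using assms by (auto simp: stepD_def)
  obtain D2 where D2: "finite D2" "\<forall>r s. 0 \<le> r \<and> r \<le> s \<and> s < 1 \<and> (\<forall>d\<in>D2. \<not>(r<d \<and> d\<le>s)) \<longrightarrow> g r = g s"
    using assms by (auto simp: stepD_def)
  obtain D3 where D3: "finite D3" "\<forall>r s. 0 \<le> r \<and> r \<le> s \<and> s < 1 \<and> (\<forall>d\<in>D3. \<not>(r<d \<and> d\<le>s)) \<longrightarrow> h r = h s"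
    using assms by (auto simp: stepD_def)
  show ?thesis unfolding stepD_def
  proof (intro exI[of _ "D1 \<union> D2 \<union> D3"] conjI allI impI)
    fix r s :: real assume h: "0 \<le> r \<and> r \<le> s \<and> s < 1 \<and> (\<forall>d\<in>D1 \<union> D2 \<union> D3. \<not> (r < d \<and> d \<le> s))"
    have "f r = f s" using D1(2) h by blast
    moreover have "g r = g s" using D2(2) h by blast
    moreover have "h r = h s" using D3(2) h by blast
    ultimately show "F (f r) (g r) (h r) = F (f s) (g s) (h s)" by simp
  qed (use D1 D2 D3 in simp)
qed

lemma stepD_const: "stepD (\<lambda>r. c)"
  unfolding stepD_def by (rule exI[of _ "{}"]) auto

lemma stepD_trunc:
  assumes "stepD f" shows "stepD (\<lambda>r. if r < t then f r else c)"
proof -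
  obtain D where D: "finite D" "\<forall>r s. 0 \<le> r \<and> r \<le> s \<and> s < 1 \<and> (\<forall>d\<in>D. \<not>(r<d \<and> d\<le>s)) \<longrightarrow> f r = f s"
    using assms by (auto simp: stepD_def)
  show ?thesis unfolding stepD_def
  proof (intro exI[of _ "insert t D"] conjI allI impI)
    fix r s :: real assume h: "0 \<le> r \<and> r \<le> s \<and> s < 1 \<and> (\<forall>d\<in>insert t D. \<not> (r < d \<and> d \<le> s))"
    then have "f r = f s" using D by auto
    moreover have "(r < t) = (s < t)" using h by auto
    ultimately show "(if r < t then f r else c) = (if s < t then f s else c)" by simp
  qed (use D in simp)
qed

lemma stepD_piece:
  assumes "stepD f" "r0 \<in> J"
  shows "\<exists>t. r0 < t \<and> t \<le> 1 \<and> (\<forall>r\<in>{r0..<t}. f r = f r0)"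
proof -
  obtain D where D: "finite D" "\<forall>r s. 0 \<le> r \<and> r \<le> s \<and> s < 1 \<and> (\<forall>d\<in>D. \<not>(r<d \<and> d\<le>s)) \<longrightarrow> f r = f s"
    using assms by (auto simp: stepD_def)
  define t where "t = Min (insert 1 {d\<in>D. r0 < d})"
  have fin: "finite (insert 1 {d\<in>D. r0 < d})" using D by simp
  have "t \<in> insert 1 {d\<in>D. r0 < d}" unfolding t_def by (rule Min_in[OF fin]) simp
  then have t1: "r0 < t" using assms by auto
  have t2: "t \<le> 1" unfolding t_def using fin by simp
  have "\<forall>r\<in>{r0..<t}. f r = f r0"
  proof
    fix r assume r: "r \<in> {r0..<t}"
    have "\<forall>d\<in>D. \<not>(r0<d \<and> d\<le>r)"
    proof (intro ballI notI)
      fix d assume "d \<in> D" "r0 < d \<and> d \<le> r"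
      then have "t \<le> d" unfolding t_def using fin by simp
      then show False using r \<open>r0 < d \<and> d \<le> r\<close> by simp
    qed
    then have "f r0 = f r" using D(2) assms(2) r t2 by auto
    then show "f r = f r0" by simp
  qed
  then show ?thesis using t1 t2 by blast
qed

lemma carrier_iff:
  "f \<in> bullet_carrier G \<longleftrightarrow> (\<forall>r. r \<notin> J \<longrightarrow> f r = undefined) \<and> (\<forall>r\<in>J. f r \<in> G) \<and> stepD f"
proof
  assume "f \<in> bullet_carrier G"
  then obtain a n where "ispart a n" "\<forall>k<n. \<forall>r\<in>{a k..<a (Suc k)}. f r = f (a k)"
    "(\<forall>r. r \<notin> J \<longrightarrow> f r = undefined)" "(\<forall>r\<in>J. f r \<in> G)"
    unfolding bullet_carrier_def ispart_def by blast
  then show "(\<forall>r. r \<notin> J \<longrightarrow> f r = undefined) \<and> (\<forall>r\<in>J. f r \<in> G) \<and> stepD f"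
    using stepD_of_part by blast
next
  assume h: "(\<forall>r. r \<notin> J \<longrightarrow> f r = undefined) \<and> (\<forall>r\<in>J. f r \<in> G) \<and> stepD f"
  then obtain a n where "ispart a n" "\<forall>k<n. \<forall>r\<in>{a k..<a (Suc k)}. f r = f (a k)"
    using part_of_stepD by blast
  then show "f \<in> bullet_carrier G" using h unfolding bullet_carrier_def ispart_def by blast
qed

lemma carrier_finite_range:
  assumes "f \<in> bullet_carrier G" shows "finite (f ` J)"
proof -
  obtain a n where an: "ispart a n" "\<forall>k<n. \<forall>r\<in>{a k..<a (Suc k)}. f r = f (a k)"
    using assms unfolding bullet_carrier_def ispart_def by blast
  have "f ` J \<subseteq> f ` (a ` {..<n})"
  proof
    fix y assume "y \<in> f ` J"
    then obtain r where r: "r \<in> J" "y = f r" by blast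
    from part_cover[OF an(1) r(1)] obtain k where "k<n" "a k \<le> r" "r < a (Suc k)" by blast
    moreover have "f r = f (a k)" using an(2)[rule_format, of k r] calculation by simp
    ultimately show "y \<in> f ` (a ` {..<n})" using r by auto
  qed
  then show ?thesis by (rule finite_subset) simp
qed

lemma carrier_meas:
  assumes "f \<in> bullet_carrier G" shows "{r\<in>J. P (f r)} \<in> lmeasurable"
proof -
  obtain a n where an: "ispart a n" "\<forall>k<n. \<forall>r\<in>{a k..<a (Suc k)}. f r = f (a k)"
    using assms unfolding bullet_carrier_def ispart_def by blast
  have eq: "{r\<in>J. P (f r)} = (\<Union>k\<in>{k. k<n \<and> P (f (a k))}. {a k..<a (Suc k)})"
  proof
    show "{r \<in> J. P (f r)} \<subseteq> (\<Union>k\<in>{k. k<n \<and> P (f (a k))}. {a k..<a (Suc k)})"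
    proof
      fix r assume r: "r \<in> {r \<in> J. P (f r)}"
      from part_cover[OF an(1)] r obtain k where "k<n" "a k \<le> r" "r < a (Suc k)" by blast
      moreover have "f r = f (a k)" using an(2)[rule_format, of k r] calculation by simp
      ultimately show "r \<in> (\<Union>k\<in>{k. k<n \<and> P (f (a k))}. {a k..<a (Suc k)})" using r by auto
    qed
  next
    show "(\<Union>k\<in>{k. k<n \<and> P (f (a k))}. {a k..<a (Suc k)}) \<subseteq> {r \<in> J. P (f r)}"
    proof
      fix r assume "r \<in> (\<Union>k\<in>{k. k<n \<and> P (f (a k))}. {a k..<a (Suc k)})"
      then obtain k where k: "k<n" "P (f (a k))" "a k \<le> r" "r < a (Suc k)" by auto
      have "0 \<le> a k" "a (Suc k) \<le> 1" using part_bounds[OF an(1)] k by auto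
      moreover have "f r = f (a k)" using an(2)[rule_format, of k r] k by simp
      ultimately show "r \<in> {r \<in> J. P (f r)}" using k by auto
    qed
  qed
  have "{r\<in>J. P (f r)} \<in> sets lebesgue" unfolding eq by (rule sets.finite_UN) auto
  moreover have "bounded {r\<in>J. P (f r)}" by (rule bounded_subset[of "{0..1}"]) auto
  ultimately show ?thesis using bounded_set_imp_lmeasurable by blast
qed



locale gyro =
  fixes G :: "'a set" and op :: "'a \<Rightarrow> 'a \<Rightarrow> 'a" and gyr :: "'a \<Rightarrow> 'a \<Rightarrow> 'a \<Rightarrow> 'a"
  assumes gw: "gyrogroup_with G op gyr"
begin

abbreviation "e \<equiv> gzero G op"
abbreviation "ng \<equiv> ginv G op"

lemmas gw' = gw[unfolded gyrogroup_with_def]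
lemma closed: "x \<in> G \<Longrightarrow> y \<in> G \<Longrightarrow> op x y \<in> G"
  using gw'[THEN conjunct1] by blast

lemma zero_props: "e \<in> G \<and> (\<forall>a\<in>G. op e a = a \<and> op a e = a)"
proof -
  have "\<exists>!e. e \<in> G \<and> (\<forall>a\<in>G. op e a = a \<and> op a e = a)" using gw'[THEN conjunct2, THEN conjunct1] .
  then show ?thesis unfolding gzero_def by (rule theI')
qed

lemma zero_in: "e \<in> G" using zero_props by blast
lemma left_id: "a \<in> G \<Longrightarrow> op e a = a" using zero_props by blast
lemma right_id: "a \<in> G \<Longrightarrow> op a e = a" using zero_props by blast

lemma inv_ex1: "x \<in> G \<Longrightarrow> \<exists>!y. y \<in> G \<and> op y x = e \<and> op x y = e"
  using gw'[THEN conjunct2, THEN conjunct2, THEN conjunct1] by blast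

lemma inv_props: "x \<in> G \<Longrightarrow> ng x \<in> G \<and> op (ng x) x = e \<and> op x (ng x) = e"
  unfolding ginv_def by (rule theI'[OF inv_ex1])

lemma inv_in: "x \<in> G \<Longrightarrow> ng x \<in> G" using inv_props by blast
lemma inv_left: "x \<in> G \<Longrightarrow> op (ng x) x = e" using inv_props by blast
lemma inv_right: "x \<in> G \<Longrightarrow> op x (ng x) = e" using inv_props by blast

lemma inv_unique: "x \<in> G \<Longrightarrow> y \<in> G \<Longrightarrow> op y x = e \<Longrightarrow> op x y = e \<Longrightarrow> ng x = y"
  unfolding ginv_def by (rule the1_equality[OF inv_ex1]) auto

lemma aut: "x \<in> G \<Longrightarrow> y \<in> G \<Longrightarrow> gyro_automorphism G op (gyr x y)"
  using gw'[THEN conjunct2, THEN conjunct2, THEN conjunct2, THEN conjunct1] by blast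

lemma gyr_in: "x \<in> G \<Longrightarrow> y \<in> G \<Longrightarrow> z \<in> G \<Longrightarrow> gyr x y z \<in> G"
  using aut unfolding gyro_automorphism_def bij_betw_def by blast

lemma gyr_inj: "x \<in> G \<Longrightarrow> y \<in> G \<Longrightarrow> inj_on (gyr x y) G"
  using aut unfolding gyro_automorphism_def bij_betw_def by blast

lemma assoc: "x \<in> G \<Longrightarrow> y \<in> G \<Longrightarrow> z \<in> G \<Longrightarrow> op x (op y z) = op (op x y) (gyr x y z)"
  using gw'[THEN conjunct2, THEN conjunct2, THEN conjunct2, THEN conjunct2, THEN conjunct1] by blast

lemma loop: "x \<in> G \<Longrightarrow> y \<in> G \<Longrightarrow> z \<in> G \<Longrightarrow> gyr (op x y) y z = gyr x y z"
  using gw'[THEN conjunct2, THEN conjunct2, THEN conjunct2, THEN conjunct2, THEN conjunct2] by blast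

lemma left_cancel_aux: "a \<in> G \<Longrightarrow> z \<in> G \<Longrightarrow> op (ng a) (op a z) = gyr e a z"
proof -
  assume a: "a \<in> G" and z: "z \<in> G"
  have "op (ng a) (op a z) = op (op (ng a) a) (gyr (ng a) a z)" using assoc inv_in a z by blast
  also have "\<dots> = gyr (ng a) a z" using inv_left a left_id gyr_in inv_in z by simp
  also have "\<dots> = gyr (op (ng a) a) a z" using loop inv_in a z by simp
  also have "\<dots> = gyr e a z" using inv_left a by simp
  finally show ?thesis .
qed

lemma gyr_zero: "a \<in> G \<Longrightarrow> z \<in> G \<Longrightarrow> gyr e a z = z"
proof -
  assume a: "a \<in> G" and z: "z \<in> G"
  have h1: "\<And>w. w \<in> G \<Longrightarrow> op a w = op a (gyr e a w)"
    using assoc[OF zero_in a] left_id a closed by simp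
  have gz: "gyr e a z \<in> G" using gyr_in zero_in a z by blast
  have "gyr e a (gyr e a z) = op (ng a) (op a (gyr e a z))" using left_cancel_aux[OF a gz] by simp
  also have "\<dots> = op (ng a) (op a z)" using h1[OF z] by simp
  also have "\<dots> = gyr e a z" using left_cancel_aux[OF a z] .
  finally have "gyr e a (gyr e a z) = gyr e a z" .
  then show ?thesis using gyr_inj[OF zero_in a] gz z unfolding inj_on_def by blast
qed

lemma left_cancel: "a \<in> G \<Longrightarrow> b \<in> G \<Longrightarrow> op (ng a) (op a b) = b"
  using left_cancel_aux gyr_zero by simp

lemma inv_inv: "a \<in> G \<Longrightarrow> ng (ng a) = a"
  using inv_unique[of "ng a" a] inv_in inv_left inv_right by simp

lemma left_cancel2: "a \<in> G \<Longrightarrow> b \<in> G \<Longrightarrow> op a (op (ng a) b) = b"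
  using left_cancel[of "ng a" b] inv_in inv_inv by simp

lemma inv_zero: "ng e = e"
  using inv_unique[of e e] zero_in left_id by simp

lemma cancel_inj: "a \<in> G \<Longrightarrow> x \<in> G \<Longrightarrow> y \<in> G \<Longrightarrow> op a x = op a y \<Longrightarrow> x = y"
  using left_cancel by metis

lemma gyr_formula: "a \<in> G \<Longrightarrow> b \<in> G \<Longrightarrow> c \<in> G \<Longrightarrow> gyr a b c = op (ng (op a b)) (op a (op b c))"
  using assoc left_cancel closed gyr_in by simp

end


lemma stepD_cong: "stepD f \<Longrightarrow> (\<forall>r\<in>J. f r = g r) \<Longrightarrow> stepD g"
proof -
  assume h: "stepD f" "\<forall>r\<in>J. f r = g r"
  obtain D where D: "finite D" "\<forall>r s. 0 \<le> r \<and> r \<le> s \<and> s < 1 \<and> (\<forall>d\<in>D. \<not>(r<d \<and> d\<le>s)) \<longrightarrow> f r = f s"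
    using h(1) by (auto simp: stepD_def)
  show ?thesis unfolding stepD_def
  proof (intro exI[of _ D] conjI allI impI)
    fix r s :: real assume a: "0 \<le> r \<and> r \<le> s \<and> s < 1 \<and> (\<forall>d\<in>D. \<not> (r < d \<and> d \<le> s))"
    then have "f r = f s" using D(2) by blast
    moreover have "r \<in> J" "s \<in> J" using a by auto
    ultimately show "g r = g s" using h(2) by simp
  qed (use D in simp)
qed

lemma stepD_meas:
  assumes "stepD f" shows "{r\<in>J. P (f r)} \<in> lmeasurable"
proof -
  obtain a n where an: "ispart a n" "\<forall>k<n. \<forall>r\<in>{a k..<a (Suc k)}. f r = f (a k)"
    using part_of_stepD[OF assms] by blast
  have eq: "{r\<in>J. P (f r)} = (\<Union>k\<in>{k. k<n \<and> P (f (a k))}. {a k..<a (Suc k)})"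
  proof
    show "{r \<in> J. P (f r)} \<subseteq> (\<Union>k\<in>{k. k<n \<and> P (f (a k))}. {a k..<a (Suc k)})"
    proof
      fix r assume r: "r \<in> {r \<in> J. P (f r)}"
      from part_cover[OF an(1)] r obtain k where "k<n" "a k \<le> r" "r < a (Suc k)" by blast
      moreover have "f r = f (a k)" using an(2)[rule_format, of k r] calculation by simp
      ultimately show "r \<in> (\<Union>k\<in>{k. k<n \<and> P (f (a k))}. {a k..<a (Suc k)})" using r by auto
    qed
  next
    show "(\<Union>k\<in>{k. k<n \<and> P (f (a k))}. {a k..<a (Suc k)}) \<subseteq> {r \<in> J. P (f r)}"
    proof
      fix r assume "r \<in> (\<Union>k\<in>{k. k<n \<and> P (f (a k))}. {a k..<a (Suc k)})"
      then obtain k where k: "k<n" "P (f (a k))" "a k \<le> r" "r < a (Suc k)" by auto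
      have "0 \<le> a k" "a (Suc k) \<le> 1" using part_bounds[OF an(1)] k by auto
      moreover have "f r = f (a k)" using an(2)[rule_format, of k r] k by simp
      ultimately show "r \<in> {r \<in> J. P (f r)}" using k by auto
    qed
  qed
  have "{r\<in>J. P (f r)} \<in> sets lebesgue" unfolding eq by (rule sets.finite_UN) auto
  moreover have "bounded {r\<in>J. P (f r)}" by (rule bounded_subset[of "{0..1}"]) auto
  ultimately show ?thesis using bounded_set_imp_lmeasurable by blast
qed

lemma meas2: "f \<in> bullet_carrier G \<Longrightarrow> g \<in> bullet_carrier G' \<Longrightarrow> {r\<in>J. P (f r) (g r)} \<in> lmeasurable"
  using stepD_meas[OF stepD_comp3[of f g g "\<lambda>x y z. (x,y)"], of "\<lambda>p. P (fst p) (snd p)"]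
  by (simp add: carrier_iff)

lemma meas_mono: "S \<in> lmeasurable \<Longrightarrow> T \<in> lmeasurable \<Longrightarrow> S \<subseteq> T \<Longrightarrow> measure lebesgue S \<le> measure lebesgue T"
  by (simp add: measure_mono_fmeasurable)

lemma meas_un: "S \<in> lmeasurable \<Longrightarrow> A \<in> lmeasurable \<Longrightarrow> B \<in> lmeasurable \<Longrightarrow> S \<subseteq> A \<union> B
   \<Longrightarrow> measure lebesgue S \<le> measure lebesgue A + measure lebesgue B"
proof -
  assume h: "S \<in> lmeasurable" "A \<in> lmeasurable" "B \<in> lmeasurable" "S \<subseteq> A \<union> B"
  have "measure lebesgue S \<le> measure lebesgue (A \<union> B)"
    using h by (intro meas_mono) auto
  also have "\<dots> \<le> measure lebesgue A + measure lebesgue B"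
    using h by (intro measure_Un_le) auto
  finally show ?thesis .
qed

lemma ivl_meas: "{s..<t::real} \<in> lmeasurable"
  by (intro bounded_set_imp_lmeasurable) (auto intro: bounded_subset[of "{s..t}"])

lemma meas_ge_ivl: "S \<in> lmeasurable \<Longrightarrow> {s..<t} \<subseteq> S \<Longrightarrow> s \<le> t \<Longrightarrow> t - s \<le> measure lebesgue S"
  using meas_mono[of "{s..<t}" S] ivl_meas[of s t] by simp

lemma meas_le_ivl: "S \<in> lmeasurable \<Longrightarrow> S \<subseteq> {s..<t} \<Longrightarrow> s \<le> t \<Longrightarrow> measure lebesgue S \<le> t - s"
  using meas_mono[of S "{s..<t}"] ivl_meas[of s t] by simp

definition pw :: "('a \<Rightarrow> 'a \<Rightarrow> 'a) \<Rightarrow> (real \<Rightarrow> 'a) \<Rightarrow> (real \<Rightarrow> 'a) \<Rightarrow> (real \<Rightarrow> 'a)" where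
  "pw F f g = (\<lambda>r. if r \<in> J then F (f r) (g r) else undefined)"

lemma pw_in: "f \<in> bullet_carrier G \<Longrightarrow> g \<in> bullet_carrier G \<Longrightarrow> (\<And>x y. x \<in> G \<Longrightarrow> y \<in> G \<Longrightarrow> F x y \<in> G)
   \<Longrightarrow> pw F f g \<in> bullet_carrier G"
  unfolding carrier_iff pw_def
  by (auto intro!: stepD_cong[OF stepD_comp3[of f g g "\<lambda>x y z. F x y"]])

lemma bop_pw: "bullet_op op = pw op"
  unfolding bullet_op_def pw_def by (intro ext) simp

lemma const_in: "x \<in> G \<Longrightarrow> const_bullet x \<in> bullet_carrier G"
  unfolding carrier_iff const_bullet_def by (auto intro!: stepD_cong[OF stepD_const[of x]])

lemma carrier_eqI: "f \<in> bullet_carrier G \<Longrightarrow> g \<in> bullet_carrier G' \<Longrightarrow> (\<And>r. r \<in> J \<Longrightarrow> f r = g r) \<Longrightarrow> f = g"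
  unfolding carrier_iff by (intro ext) metis

lemma finite_pairs: "f \<in> bullet_carrier G \<Longrightarrow> g \<in> bullet_carrier G' \<Longrightarrow> finite ((\<lambda>r. (f r, g r)) ` J)"
  by (rule finite_subset[of _ "f ` J \<times> g ` J"]) (auto simp: carrier_finite_range)



locale tg = gyro G op gyr for G :: "'a set" and op gyr +
  fixes X :: "'a topology"
  assumes tg: "topological_gyrogroup G op X"
begin

abbreviation "C \<equiv> bullet_carrier G"
abbreviation "bop \<equiv> bullet_op op"
abbreviation "T \<equiv> bullet_topology G op X"
abbreviation "nb f V \<epsilon> \<equiv> bullet_op op f ` bullet_O G op V \<epsilon>"

lemma topX: "topspace X = G" using tg unfolding topological_gyrogroup_def by blast
lemma t1X: "t1_space X" using tg unfolding topological_gyrogroup_def by blast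
lemma contop: "continuous_map (prod_topology X X) X (\<lambda>p. op (fst p) (snd p))"
  using tg unfolding topological_gyrogroup_def by blast
lemma continv: "continuous_map X X ng"
  using tg unfolding topological_gyrogroup_def by blast

lemma cont_op2: "continuous_map Y X f \<Longrightarrow> continuous_map Y X g \<Longrightarrow> continuous_map Y X (\<lambda>y. op (f y) (g y))"
  using continuous_map_compose[OF iffD2[OF continuous_map_paired, of Y X f X g] contop] by (simp add: o_def)

lemma cont_inv1: "continuous_map Y X f \<Longrightarrow> continuous_map Y X (\<lambda>y. ng (f y))"
  using continuous_map_compose[OF _ continv] by (simp add: o_def)

lemma cont_const: "c \<in> G \<Longrightarrow> continuous_map Y X (\<lambda>y. c)"
  using topX by simp

lemma fp1:
  assumes "continuous_map (prod_topology X X) X \<Phi>" "openin X V" "\<Phi> (e,e) \<in> V"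
  shows "\<exists>V1. openin X V1 \<and> e \<in> V1 \<and> (\<forall>v\<in>V1. \<forall>w\<in>V1. \<Phi> (v,w) \<in> V)"
proof -
  have o: "openin (prod_topology X X) {p \<in> topspace (prod_topology X X). \<Phi> p \<in> V}"
    using assms(1,2) by (rule openin_continuous_map_preimage)
  have m: "(e,e) \<in> {p \<in> topspace (prod_topology X X). \<Phi> p \<in> V}" using assms(3) zero_in topX by simp
  from iffD1[OF openin_prod_topology_alt o, rule_format, OF m]
  obtain U1 U2 where U: "openin X U1" "openin X U2" "e \<in> U1" "e \<in> U2"
    "U1 \<times> U2 \<subseteq> {p \<in> topspace (prod_topology X X). \<Phi> p \<in> V}"
    by (elim exE conjE) blast
  show ?thesis
    by (rule exI[of _ "U1 \<inter> U2"]) (use U in auto)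
qed

lemma fp:
  assumes "finite A" "\<forall>a\<in>A. continuous_map (prod_topology X X) X (\<Phi> a) \<and> \<Phi> a (e,e) \<in> V" "openin X V"
  shows "\<exists>V1. openin X V1 \<and> e \<in> V1 \<and> (\<forall>a\<in>A. \<forall>v\<in>V1. \<forall>w\<in>V1. \<Phi> a (v,w) \<in> V)"
  using assms
proof (induction A rule: finite_induct)
  case empty
  then show ?case using zero_in topX by (intro exI[of _ G]) auto
next
  case (insert a A)
  then obtain V1 where V1: "openin X V1" "e \<in> V1" "\<forall>a\<in>A. \<forall>v\<in>V1. \<forall>w\<in>V1. \<Phi> a (v,w) \<in> V" by auto
  obtain V2 where V2: "openin X V2" "e \<in> V2" "\<forall>v\<in>V2. \<forall>w\<in>V2. \<Phi> a (v,w) \<in> V"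
    using fp1[of "\<Phi> a" V] insert.prems by auto
  show ?case by (rule exI[of _ "V1 \<inter> V2"]) (use V1 V2 in auto)
qed

lemma bop_app: "r \<in> J \<Longrightarrow> bop f g r = op (f r) (g r)"
  by (simp add: bullet_op_def)

lemma bop_in: "f \<in> C \<Longrightarrow> g \<in> C \<Longrightarrow> bop f g \<in> C"
  unfolding bop_pw by (rule pw_in) (auto intro: closed)

lemma bop_zero: "f \<in> C \<Longrightarrow> bop f (const_bullet e) = f"
  by (rule carrier_eqI[OF bop_in[OF _ const_in[OF zero_in]] _]) (auto simp: bop_app const_bullet_def carrier_iff right_id)

lemma dif_in: "f \<in> C \<Longrightarrow> k \<in> C \<Longrightarrow> pw (\<lambda>x y. op (ng x) y) f k \<in> C"
  by (rule pw_in) (auto intro: closed inv_in)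

lemma dif_eq: "f \<in> C \<Longrightarrow> k \<in> C \<Longrightarrow> bop f (pw (\<lambda>x y. op (ng x) y) f k) = k"
  by (rule carrier_eqI[OF bop_in[OF _ dif_in]]) (auto simp: bop_app pw_def carrier_iff left_cancel2)

lemma nb_iff:
  assumes f: "f \<in> C"
  shows "k \<in> nb f V \<epsilon> \<longleftrightarrow> k \<in> C \<and> measure lebesgue {r\<in>J. op (ng (f r)) (k r) \<notin> V} < \<epsilon>"
proof
  assume "k \<in> nb f V \<epsilon>"
  then obtain u where u: "u \<in> C" "measure lebesgue {r\<in>J. u r \<notin> V} < \<epsilon>" "k = bop f u"
    unfolding bullet_O_def by blast
  have "{r\<in>J. op (ng (f r)) (k r) \<notin> V} = {r\<in>J. u r \<notin> V}"
    using u f by (auto simp: bop_app carrier_iff left_cancel)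
  then show "k \<in> C \<and> measure lebesgue {r\<in>J. op (ng (f r)) (k r) \<notin> V} < \<epsilon>"
    using u f bop_in by simp
next
  assume k: "k \<in> C \<and> measure lebesgue {r\<in>J. op (ng (f r)) (k r) \<notin> V} < \<epsilon>"
  define u where "u = pw (\<lambda>x y. op (ng x) y) f k"
  have "{r\<in>J. op (ng (f r)) (k r) \<notin> V} = {r\<in>J. u r \<notin> V}"
    by (auto simp: u_def pw_def)
  then have "u \<in> bullet_O G op V \<epsilon>" using k dif_in[OF f] unfolding bullet_O_def u_def by simp
  moreover have "k = bop f u" using dif_eq[OF f] k u_def by simp
  ultimately show "k \<in> nb f V \<epsilon>" by blast
qed

lemma self_nb: "f \<in> C \<Longrightarrow> e \<in> V \<Longrightarrow> \<epsilon> > 0 \<Longrightarrow> f \<in> nb f V \<epsilon>"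
proof -
  assume h: "f \<in> C" "e \<in> V" "\<epsilon> > 0"
  have "{r\<in>J. op (ng (f r)) (f r) \<notin> V} = {}" using h by (auto simp: carrier_iff inv_left)
  then have "measure lebesgue {r\<in>J. op (ng (f r)) (f r) \<notin> V} < \<epsilon>" using h(3) by (simp only: measure_empty)
  then show ?thesis using nb_iff[OF h(1)] h(1) by blast
qed

lemma nb_sub: "f \<in> C \<Longrightarrow> nb f V \<epsilon> \<subseteq> C"
  using nb_iff by blast

definition Pt :: "(real \<Rightarrow> 'a) set \<Rightarrow> bool" where
  "Pt U \<longleftrightarrow> U \<subseteq> C \<and> (\<forall>f\<in>U. \<exists>V \<epsilon>. openin X V \<and> e \<in> V \<and> \<epsilon> > 0 \<and> nb f V \<epsilon> \<subseteq> U)"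

lemma nb_mono:
  assumes f: "f \<in> C" and "V' \<subseteq> V" "\<epsilon>' \<le> \<epsilon>"
  shows "nb f V' \<epsilon>' \<subseteq> nb f V \<epsilon>"
proof
  fix k assume "k \<in> nb f V' \<epsilon>'"
  then have k: "k \<in> C" "measure lebesgue {r\<in>J. op (ng (f r)) (k r) \<notin> V'} < \<epsilon>'" using nb_iff[OF f] by auto
  have "measure lebesgue {r\<in>J. op (ng (f r)) (k r) \<notin> V} \<le> measure lebesgue {r\<in>J. op (ng (f r)) (k r) \<notin> V'}"
    by (rule meas_mono) (use meas2[OF f k(1)] assms in auto)
  then show "k \<in> nb f V \<epsilon>" using nb_iff[OF f] k assms by simp
qed

lemma istop: "istopology Pt"
  unfolding istopology_def
proof (intro conjI allI impI ballI)
  fix S U assume S: "Pt S" and U: "Pt U"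
  show "Pt (S \<inter> U)" unfolding Pt_def
  proof (intro conjI ballI)
    show "S \<inter> U \<subseteq> C" using S unfolding Pt_def by blast
    fix f assume f: "f \<in> S \<inter> U"
    then have fC: "f \<in> C" using S unfolding Pt_def by blast
    have "\<exists>V \<epsilon>. openin X V \<and> e \<in> V \<and> \<epsilon> > 0 \<and> nb f V \<epsilon> \<subseteq> S" using S f unfolding Pt_def by (meson IntD1 bspec)
    then obtain V1 \<epsilon>1 where 1: "openin X V1" "e \<in> V1" "\<epsilon>1 > 0" "nb f V1 \<epsilon>1 \<subseteq> S" by blast
    have "\<exists>V \<epsilon>. openin X V \<and> e \<in> V \<and> \<epsilon> > 0 \<and> nb f V \<epsilon> \<subseteq> U" using U f unfolding Pt_def by (meson IntD2 bspec)
    then obtain V2 \<epsilon>2 where 2: "openin X V2" "e \<in> V2" "\<epsilon>2 > 0" "nb f V2 \<epsilon>2 \<subseteq> U" by blast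
    have s1: "nb f (V1 \<inter> V2) (min \<epsilon>1 \<epsilon>2) \<subseteq> nb f V1 \<epsilon>1" by (rule nb_mono[OF fC]) auto
    have s2: "nb f (V1 \<inter> V2) (min \<epsilon>1 \<epsilon>2) \<subseteq> nb f V2 \<epsilon>2" by (rule nb_mono[OF fC]) auto
    have "nb f (V1 \<inter> V2) (min \<epsilon>1 \<epsilon>2) \<subseteq> S \<inter> U"
      using s1 s2 1(4) 2(4) by (meson Int_greatest subset_trans)
    then show "\<exists>V \<epsilon>. openin X V \<and> e \<in> V \<and> \<epsilon> > 0 \<and> nb f V \<epsilon> \<subseteq> S \<inter> U"
      using 1 2 by (intro exI[of _ "V1 \<inter> V2"] exI[of _ "min \<epsilon>1 \<epsilon>2"]) auto
  qed
next
  fix K assume K: "\<forall>U\<in>K. Pt U"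
  show "Pt (\<Union>K)" unfolding Pt_def
  proof (intro conjI ballI)
    show "\<Union>K \<subseteq> C" using K unfolding Pt_def by (meson Sup_least)
    fix f assume "f \<in> \<Union>K"
    then obtain U where "U \<in> K" "f \<in> U" by blast
    moreover have "Pt U" using K \<open>U \<in> K\<close> by (rule bspec)
    ultimately have "\<exists>V \<epsilon>. openin X V \<and> e \<in> V \<and> \<epsilon> > 0 \<and> nb f V \<epsilon> \<subseteq> U" unfolding Pt_def by (meson bspec)
    then show "\<exists>V \<epsilon>. openin X V \<and> e \<in> V \<and> \<epsilon> > 0 \<and> nb f V \<epsilon> \<subseteq> \<Union>K" using \<open>U \<in> K\<close> by (meson Sup_upper subset_trans)
  qed
qed

lemma openT: "openin T U \<longleftrightarrow> Pt U"
proof -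
  have "T = topology Pt" unfolding bullet_topology_def Pt_def by simp
  then show ?thesis using topology_inverse'[OF istop] by simp
qed

lemma topT: "topspace T = C"
proof -
  have "Pt C" unfolding Pt_def
  proof (intro conjI ballI)
    fix f assume "f \<in> C"
    then show "\<exists>V \<epsilon>. openin X V \<and> e \<in> V \<and> \<epsilon> > 0 \<and> nb f V \<epsilon> \<subseteq> C"
      using zero_in topX nb_sub by (intro exI[of _ G] exI[of _ "1::real"]) auto
  qed simp
  then have "C \<subseteq> topspace T" using openT openin_subset by blast
  moreover have "topspace T \<subseteq> C" using openT[of "topspace T"] unfolding Pt_def by simp
  ultimately show ?thesis by blast
qed

end


lemma meas_cover2: "A \<in> lmeasurable \<Longrightarrow> B \<in> lmeasurable \<Longrightarrow> S \<in> lmeasurable \<Longrightarrow> S \<subseteq> A \<union> B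
  \<Longrightarrow> measure lebesgue A < \<epsilon>/2 \<Longrightarrow> measure lebesgue B < \<epsilon>/2 \<Longrightarrow> measure lebesgue S < \<epsilon>"
  using meas_un[of S A B] by linarith

context tg begin

lemma cont3: "a \<in> G \<Longrightarrow> continuous_map (prod_topology X X) X (\<lambda>p. op (ng a) (op (op a (fst p)) (snd p)))"
  by (intro cont_op2 cont_const inv_in continuous_map_fst continuous_map_snd) auto

lemma L:
  assumes f: "f \<in> C" and V: "openin X V" "e \<in> V" "\<epsilon> > 0"
  shows "\<exists>U. openin T U \<and> f \<in> U \<and> U \<subseteq> nb f V \<epsilon>"
proof -
  define U where "U = {h\<in>C. \<exists>V' \<epsilon>'. openin X V' \<and> e\<in>V' \<and> \<epsilon>'>0 \<and> nb h V' \<epsilon>' \<subseteq> nb f V \<epsilon>}"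
  have fU: "f \<in> U" unfolding U_def using f V by blast
  have UB: "U \<subseteq> nb f V \<epsilon>"
  proof
    fix h assume "h \<in> U"
    then obtain V' \<epsilon>' where h: "h \<in> C" "openin X V'" "e\<in>V'" "\<epsilon>'>0" "nb h V' \<epsilon>' \<subseteq> nb f V \<epsilon>"
      unfolding U_def by blast
    then show "h \<in> nb f V \<epsilon>" using self_nb[of h V' \<epsilon>'] by blast
  qed
  have "Pt U" unfolding Pt_def
  proof (intro conjI ballI)
    show "U \<subseteq> C" unfolding U_def by blast
    fix h assume "h \<in> U"
    then obtain V' \<epsilon>' where h: "h \<in> C" "openin X V'" "e\<in>V'" "\<epsilon>'>0" "nb h V' \<epsilon>' \<subseteq> nb f V \<epsilon>"
      unfolding U_def by blast
    define \<Phi> where "\<Phi> = (\<lambda>a p. op (ng a) (op (op a (fst p)) (snd p)))"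
    have hG: "\<forall>r\<in>J. h r \<in> G" using h(1) by (simp add: carrier_iff)
    have "\<forall>a\<in>h ` J. continuous_map (prod_topology X X) X (\<Phi> a) \<and> \<Phi> a (e,e) \<in> V'"
      using hG cont3 h(3) by (auto simp: \<Phi>_def right_id inv_left)
    then obtain V1 where V1: "openin X V1" "e \<in> V1" "\<forall>a\<in>h ` J. \<forall>v\<in>V1. \<forall>w\<in>V1. \<Phi> a (v,w) \<in> V'"
      using fp[of "h ` J" \<Phi> V'] carrier_finite_range[OF h(1)] h(2) by blast
    have V1G: "V1 \<subseteq> G" using V1(1) openin_subset topX by blast
    have "nb h V1 (\<epsilon>'/2) \<subseteq> U"
    proof
      fix k assume k: "k \<in> nb h V1 (\<epsilon>'/2)"
      then have kC: "k \<in> C" and km: "measure lebesgue {r\<in>J. op (ng (h r)) (k r) \<notin> V1} < \<epsilon>'/2"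
        using nb_iff[OF h(1)] by auto
      have kG: "\<forall>r\<in>J. k r \<in> G" using kC by (simp add: carrier_iff)
      have "nb k V1 (\<epsilon>'/2) \<subseteq> nb h V' \<epsilon>'"
      proof
        fix l assume "l \<in> nb k V1 (\<epsilon>'/2)"
        then have lC: "l \<in> C" and lm: "measure lebesgue {r\<in>J. op (ng (k r)) (l r) \<notin> V1} < \<epsilon>'/2"
          using nb_iff[OF kC] by auto
        have lG: "\<forall>r\<in>J. l r \<in> G" using lC by (simp add: carrier_iff)
        have sub: "{r\<in>J. op (ng (h r)) (l r) \<notin> V'} \<subseteq> {r\<in>J. op (ng (h r)) (k r) \<notin> V1} \<union> {r\<in>J. op (ng (k r)) (l r) \<notin> V1}"
        proof
          fix r assume r: "r \<in> {r\<in>J. op (ng (h r)) (l r) \<notin> V'}"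
          show "r \<in> {r\<in>J. op (ng (h r)) (k r) \<notin> V1} \<union> {r\<in>J. op (ng (k r)) (l r) \<notin> V1}"
          proof (rule ccontr)
            assume "\<not> ?thesis"
            then have vw: "op (ng (h r)) (k r) \<in> V1" "op (ng (k r)) (l r) \<in> V1" using r by auto
            have "h r \<in> h ` J" using r by auto
            then have "\<Phi> (h r) (op (ng (h r)) (k r), op (ng (k r)) (l r)) \<in> V'" using V1(3) vw by blast
            moreover have "\<Phi> (h r) (op (ng (h r)) (k r), op (ng (k r)) (l r)) = op (ng (h r)) (l r)"
              using r hG kG lG by (simp add: \<Phi>_def left_cancel2)
            ultimately show False using r by simp
          qed
        qed
        have "measure lebesgue {r\<in>J. op (ng (h r)) (l r) \<notin> V'} < \<epsilon>'"
          by (rule meas_cover2[OF meas2[OF h(1) kC] meas2[OF kC lC] meas2[OF h(1) lC] sub km lm])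
        then show "l \<in> nb h V' \<epsilon>'" using nb_iff[OF h(1)] lC by blast
      qed
      then have "nb k V1 (\<epsilon>'/2) \<subseteq> nb f V \<epsilon>" using h(5) by blast
      then show "k \<in> U" unfolding U_def using kC V1 h(4) by (intro CollectI conjI exI[of _ V1] exI[of _ "\<epsilon>'/2"]) auto
    qed
    then show "\<exists>V \<epsilon>. openin X V \<and> e \<in> V \<and> \<epsilon> > 0 \<and> nb h V \<epsilon> \<subseteq> U"
      using V1 h(4) by (intro exI[of _ V1] exI[of _ "\<epsilon>'/2"]) auto
  qed
  then show ?thesis using fU UB openT by blast
qed

lemma contT:
  assumes "\<forall>y\<in>topspace Y. \<phi> y \<in> C"
    "\<And>y V \<epsilon>. y \<in> topspace Y \<Longrightarrow> openin X V \<Longrightarrow> e \<in> V \<Longrightarrow> \<epsilon> > 0 \<Longrightarrow>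
        \<exists>W. openin Y W \<and> y \<in> W \<and> (\<forall>z\<in>W. \<phi> z \<in> nb (\<phi> y) V \<epsilon>)"
  shows "continuous_map Y T \<phi>"
  unfolding continuous_map_def topT
proof (intro conjI allI impI)
  show "\<phi> \<in> topspace Y \<rightarrow> C" using assms(1) by blast
  fix U assume "openin T U"
  then have PU: "Pt U" using openT by blast
  show "openin Y {x \<in> topspace Y. \<phi> x \<in> U}"
  proof (subst openin_subopen, intro ballI)
    fix y assume y: "y \<in> {x \<in> topspace Y. \<phi> x \<in> U}"
    then have "\<exists>V \<epsilon>. openin X V \<and> e \<in> V \<and> \<epsilon> > 0 \<and> nb (\<phi> y) V \<epsilon> \<subseteq> U" using PU unfolding Pt_def by blast
    then obtain V \<epsilon> where V: "openin X V" "e \<in> V" "\<epsilon> > 0" "nb (\<phi> y) V \<epsilon> \<subseteq> U" by blast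
    obtain W where W: "openin Y W" "y \<in> W" "\<forall>z\<in>W. \<phi> z \<in> nb (\<phi> y) V \<epsilon>" using assms(2)[of y V \<epsilon>] y V by blast
    have "W \<subseteq> {x \<in> topspace Y. \<phi> x \<in> U}" using W V(4) openin_subset[OF W(1)] by blast
    then show "\<exists>T. openin Y T \<and> y \<in> T \<and> T \<subseteq> {x \<in> topspace Y. \<phi> x \<in> U}" using W by blast
  qed
qed

end


context tg begin

lemma cont_bop: "continuous_map (prod_topology T T) T (\<lambda>p. bop (fst p) (snd p))"
proof (rule contT)
  show "\<forall>y\<in>topspace (prod_topology T T). bop (fst y) (snd y) \<in> C"
    by (auto simp: topT bop_in)
next
  fix y V \<epsilon> assume y: "y \<in> topspace (prod_topology T T)" and V: "openin X V" "e \<in> V" "(\<epsilon>::real) > 0"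
  obtain f g where fg: "y = (f,g)" "f \<in> C" "g \<in> C" using y by (auto simp: topT)
  have fG: "\<forall>r\<in>J. f r \<in> G" and gG: "\<forall>r\<in>J. g r \<in> G" using fg by (auto simp: carrier_iff)
  define \<Phi> where "\<Phi> = (\<lambda>q p. op (ng (op (fst q) (snd q))) (op (op (fst q) (fst p)) (op (snd q) (snd p))))"
  have "\<forall>q\<in>(\<lambda>r. (f r, g r)) ` J. continuous_map (prod_topology X X) X (\<Phi> q) \<and> \<Phi> q (e,e) \<in> V"
  proof
    fix q assume "q \<in> (\<lambda>r. (f r, g r)) ` J"
    then obtain a b where q: "q = (a,b)" "a \<in> G" "b \<in> G" using fG gG by auto
    have "continuous_map (prod_topology X X) X (\<Phi> q)" unfolding \<Phi>_def q fst_conv snd_conv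
      by (intro cont_op2 cont_const continuous_map_fst continuous_map_snd inv_in closed q)
    moreover have "\<Phi> q (e,e) = e" unfolding \<Phi>_def q using q by (simp add: right_id inv_left closed)
    ultimately show "continuous_map (prod_topology X X) X (\<Phi> q) \<and> \<Phi> q (e,e) \<in> V" using V by simp
  qed
  then obtain V1 where V1: "openin X V1" "e \<in> V1" "\<forall>q\<in>(\<lambda>r. (f r, g r)) ` J. \<forall>v\<in>V1. \<forall>w\<in>V1. \<Phi> q (v,w) \<in> V"
    using fp[of "(\<lambda>r. (f r, g r)) ` J" \<Phi> V] finite_pairs[OF fg(2,3)] V(1) by blast
  obtain U1 where U1: "openin T U1" "f \<in> U1" "U1 \<subseteq> nb f V1 (\<epsilon>/2)" using L[OF fg(2) V1(1,2), of "\<epsilon>/2"] V by auto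
  obtain U2 where U2: "openin T U2" "g \<in> U2" "U2 \<subseteq> nb g V1 (\<epsilon>/2)" using L[OF fg(3) V1(1,2), of "\<epsilon>/2"] V by auto
  show "\<exists>W. openin (prod_topology T T) W \<and> y \<in> W \<and> (\<forall>z\<in>W. bop (fst z) (snd z) \<in> nb (bop (fst y) (snd y)) V \<epsilon>)"
  proof (intro exI[of _ "U1 \<times> U2"] conjI ballI)
    show "openin (prod_topology T T) (U1 \<times> U2)" using U1 U2 by (simp add: openin_prod_Times_iff)
    show "y \<in> U1 \<times> U2" using fg U1 U2 by simp
    fix z assume "z \<in> U1 \<times> U2"
    then obtain h k where z0: "z = (h,k)" "h \<in> U1" "k \<in> U2" by blast
    have z: "z = (h,k)" "h \<in> nb f V1 (\<epsilon>/2)" "k \<in> nb g V1 (\<epsilon>/2)" using z0 U1(3) U2(3) by (blast, blast, blast)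
    have hC: "h \<in> C" and hm: "measure lebesgue {r\<in>J. op (ng (f r)) (h r) \<notin> V1} < \<epsilon>/2"
      using z(2) nb_iff[OF fg(2)] by auto
    have kC: "k \<in> C" and km: "measure lebesgue {r\<in>J. op (ng (g r)) (k r) \<notin> V1} < \<epsilon>/2"
      using z(3) nb_iff[OF fg(3)] by auto
    have hG: "\<forall>r\<in>J. h r \<in> G" and kG: "\<forall>r\<in>J. k r \<in> G" using hC kC by (auto simp: carrier_iff)
    have sub: "{r\<in>J. op (ng (bop f g r)) (bop h k r) \<notin> V} \<subseteq> {r\<in>J. op (ng (f r)) (h r) \<notin> V1} \<union> {r\<in>J. op (ng (g r)) (k r) \<notin> V1}"
    proof
      fix r assume r: "r \<in> {r\<in>J. op (ng (bop f g r)) (bop h k r) \<notin> V}"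
      show "r \<in> {r\<in>J. op (ng (f r)) (h r) \<notin> V1} \<union> {r\<in>J. op (ng (g r)) (k r) \<notin> V1}"
      proof (rule ccontr)
        assume "\<not> ?thesis"
        then have vw: "op (ng (f r)) (h r) \<in> V1" "op (ng (g r)) (k r) \<in> V1" using r by auto
        have "(f r, g r) \<in> (\<lambda>r. (f r, g r)) ` J" using r by auto
        then have "\<Phi> (f r, g r) (op (ng (f r)) (h r), op (ng (g r)) (k r)) \<in> V" using V1(3) vw by blast
        moreover have "\<Phi> (f r, g r) (op (ng (f r)) (h r), op (ng (g r)) (k r)) = op (ng (bop f g r)) (bop h k r)"
          using r fG gG hG kG by (simp add: \<Phi>_def left_cancel2 bop_app)
        ultimately show False using r by simp
      qed
    qed
    have "measure lebesgue {r\<in>J. op (ng (bop f g r)) (bop h k r) \<notin> V} < \<epsilon>"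
      by (rule meas_cover2[OF meas2[OF fg(2) hC] meas2[OF fg(3) kC] meas2[OF bop_in[OF fg(2,3)] bop_in[OF hC kC]] sub hm km])
    then show "bop (fst z) (snd z) \<in> nb (bop (fst y) (snd y)) V \<epsilon>"
      using nb_iff[OF bop_in[OF fg(2,3)]] bop_in[OF hC kC] z fg by simp
  qed
qed

definition binv :: "(real \<Rightarrow> 'a) \<Rightarrow> (real \<Rightarrow> 'a)" where "binv f = pw (\<lambda>x y. ng x) f f"

lemma binv_in: "f \<in> C \<Longrightarrow> binv f \<in> C"
  unfolding binv_def by (rule pw_in) (auto intro: inv_in)

lemma cont_binv: "continuous_map T T binv"
proof (rule contT)
  show "\<forall>y\<in>topspace T. binv y \<in> C" by (auto simp: topT binv_in)
next
  fix f V \<epsilon> assume f: "f \<in> topspace T" and V: "openin X V" "e \<in> V" "(\<epsilon>::real) > 0"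
  have fC: "f \<in> C" using f topT by simp
  have fG: "\<forall>r\<in>J. f r \<in> G" using fC by (auto simp: carrier_iff)
  define \<Phi> where "\<Phi> = (\<lambda>a (p::'a\<times>'a). op (ng (ng a)) (ng (op a (fst p))))"
  have "\<forall>a\<in>f ` J. continuous_map (prod_topology X X) X (\<Phi> a) \<and> \<Phi> a (e,e) \<in> V"
  proof
    fix a assume "a \<in> f ` J"
    then have a: "a \<in> G" using fG by auto
    have "continuous_map (prod_topology X X) X (\<Phi> a)" unfolding \<Phi>_def
      by (intro cont_op2 cont_inv1 cont_const continuous_map_fst inv_in a)
    moreover have "\<Phi> a (e,e) = e" unfolding \<Phi>_def using a by (simp add: right_id inv_left inv_in)
    ultimately show "continuous_map (prod_topology X X) X (\<Phi> a) \<and> \<Phi> a (e,e) \<in> V" using V by simp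
  qed
  then obtain V1 where V1: "openin X V1" "e \<in> V1" "\<forall>a\<in>f ` J. \<forall>v\<in>V1. \<forall>w\<in>V1. \<Phi> a (v,w) \<in> V"
    using fp[of "f ` J" \<Phi> V] carrier_finite_range[OF fC] V(1) by blast
  obtain U1 where U1: "openin T U1" "f \<in> U1" "U1 \<subseteq> nb f V1 \<epsilon>" using L[OF fC V1(1,2), of "\<epsilon>"] V by auto
  show "\<exists>W. openin T W \<and> f \<in> W \<and> (\<forall>z\<in>W. binv z \<in> nb (binv f) V \<epsilon>)"
  proof (intro exI[of _ U1] conjI ballI)
    show "openin T U1" "f \<in> U1" using U1 by auto
    fix h assume "h \<in> U1"
    then have "h \<in> nb f V1 \<epsilon>" using U1(3) by blast
    then have hC: "h \<in> C" and hm: "measure lebesgue {r\<in>J. op (ng (f r)) (h r) \<notin> V1} < \<epsilon>"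
      using nb_iff[OF fC] by auto
    have hG: "\<forall>r\<in>J. h r \<in> G" using hC by (auto simp: carrier_iff)
    have sub: "{r\<in>J. op (ng (binv f r)) (binv h r) \<notin> V} \<subseteq> {r\<in>J. op (ng (f r)) (h r) \<notin> V1}"
    proof
      fix r assume r: "r \<in> {r\<in>J. op (ng (binv f r)) (binv h r) \<notin> V}"
      show "r \<in> {r\<in>J. op (ng (f r)) (h r) \<notin> V1}"
      proof (rule ccontr)
        assume "\<not> ?thesis"
        then have vw: "op (ng (f r)) (h r) \<in> V1" using r by auto
        have "f r \<in> f ` J" using r by auto
        then have "\<Phi> (f r) (op (ng (f r)) (h r), op (ng (f r)) (h r)) \<in> V" using V1(3) vw by blast
        moreover have "\<Phi> (f r) (op (ng (f r)) (h r), op (ng (f r)) (h r)) = op (ng (binv f r)) (binv h r)"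
          using r fG hG by (simp add: \<Phi>_def left_cancel2 binv_def pw_def)
        ultimately show False using r by simp
      qed
    qed
    have "measure lebesgue {r\<in>J. op (ng (binv f r)) (binv h r) \<notin> V} < \<epsilon>"
      using meas_mono[OF meas2[OF binv_in[OF fC] binv_in[OF hC]] meas2[OF fC hC] sub] hm by linarith
    then show "binv h \<in> nb (binv f) V \<epsilon>"
      using nb_iff[OF binv_in[OF fC]] binv_in[OF hC] by simp
  qed
qed

lemma t1T: "t1_space T"
  unfolding t1_space_def topT
proof (intro ballI impI)
  fix f g assume fC: "f \<in> C" and gC: "g \<in> C" and fg: "f \<noteq> g"
  obtain r0 where r0: "r0 \<in> J" "f r0 \<noteq> g r0" using carrier_eqI[OF fC gC] fg by blast
  have fG: "\<forall>r\<in>J. f r \<in> G" and gG: "\<forall>r\<in>J. g r \<in> G" using fC gC by (auto simp: carrier_iff)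
  define c where "c = op (ng (f r0)) (g r0)"
  have cG: "c \<in> G" unfolding c_def using fG gG r0 by (simp add: closed inv_in)
  have ce: "c \<noteq> e"
  proof
    assume "c = e"
    then have "op (f r0) e = g r0" using left_cancel2[of "f r0" "g r0"] fG gG r0 unfolding c_def by simp
    then show False using right_id fG r0 by simp
  qed
  obtain W where W: "openin X W" "e \<in> W" "c \<notin> W"
    using t1X unfolding t1_space_def using cG ce zero_in topX by metis
  define d where "d = pw (\<lambda>x y. op (ng x) y) f g"
  have "stepD d" using dif_in[OF fC gC] unfolding d_def by (simp add: carrier_iff)
  then obtain t where t: "r0 < t" "t \<le> 1" "\<forall>r\<in>{r0..<t}. d r = d r0" using stepD_piece r0(1) by blast
  obtain U where U: "openin T U" "f \<in> U" "U \<subseteq> nb f W (t - r0)" using L[OF fC W(1,2), of "t - r0"] t by auto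
  have "{r0..<t} \<subseteq> {r\<in>J. op (ng (f r)) (g r) \<notin> W}"
  proof
    fix r assume r: "r \<in> {r0..<t}"
    then have rJ: "r \<in> J" using r0 t by auto
    have "d r = c" using t(3) r r0 unfolding c_def d_def pw_def by simp
    then show "r \<in> {r\<in>J. op (ng (f r)) (g r) \<notin> W}" using rJ W(3) unfolding d_def pw_def by simp
  qed
  then have "t - r0 \<le> measure lebesgue {r\<in>J. op (ng (f r)) (g r) \<notin> W}"
    using meas_ge_ivl[OF meas2[OF fC gC, of "\<lambda>x y. op (ng x) y \<notin> W"], of r0 t] t by simp
  then have "g \<notin> nb f W (t - r0)" using nb_iff[OF fC] by simp
  then show "\<exists>U. openin T U \<and> f \<in> U \<and> g \<notin> U" using U by blast
qed

lemma cont_cb: "continuous_map X T const_bullet"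
proof (rule contT)
  show "\<forall>y\<in>topspace X. const_bullet y \<in> C" by (simp add: topX const_in)
next
  fix x V \<epsilon> assume x: "x \<in> topspace X" and V: "openin X V" "e \<in> V" "(\<epsilon>::real) > 0"
  have xG: "x \<in> G" using x topX by simp
  define W where "W = {y \<in> topspace X. op (ng x) y \<in> V}"
  have "continuous_map X X (\<lambda>y. op (ng x) y)" by (intro cont_op2 cont_const inv_in xG continuous_map_id[unfolded id_def])
  then have "openin X W" unfolding W_def using V(1) by (rule openin_continuous_map_preimage)
  moreover have "x \<in> W" unfolding W_def using x xG V by (simp add: inv_left)
  moreover have "\<forall>z\<in>W. const_bullet z \<in> nb (const_bullet x) V \<epsilon>"
  proof
    fix z assume z: "z \<in> W"
    have "{r\<in>J. op (ng (const_bullet x r)) (const_bullet z r) \<notin> V} = {}"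
      using z unfolding W_def const_bullet_def by auto
    then have "measure lebesgue {r\<in>J. op (ng (const_bullet x r)) (const_bullet z r) \<notin> V} < \<epsilon>" using V(3) by (simp only: measure_empty)
    then show "const_bullet z \<in> nb (const_bullet x) V \<epsilon>"
      using nb_iff[OF const_in[OF xG]] z topX unfolding W_def by (simp add: const_in)
  qed
  ultimately show "\<exists>W. openin X W \<and> x \<in> W \<and> (\<forall>z\<in>W. const_bullet z \<in> nb (const_bullet x) V \<epsilon>)" by blast
qed

end


context tg begin

definition trunc :: "real \<Rightarrow> (real \<Rightarrow> 'a) \<Rightarrow> (real \<Rightarrow> 'a)" where
  "trunc t u = (\<lambda>r. if r \<in> J then (if r < t then u r else e) else undefined)"

lemma trunc_in: "u \<in> C \<Longrightarrow> trunc t u \<in> C"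
  unfolding carrier_iff trunc_def
  by (auto intro!: stepD_cong[OF stepD_trunc[of u t e]] simp: zero_in)

lemma meas1: "f \<in> bullet_carrier G' \<Longrightarrow> {r\<in>J. P (f r)} \<in> lmeasurable"
  using meas2[of f G' f G' "\<lambda>x y. P x"] by simp

lemma path_cont:
  assumes f: "f \<in> C" and u: "u \<in> C"
  shows "continuous_map (top_of_set {0..1}) T (\<lambda>t. bop f (trunc t u))"
proof (rule contT)
  show "\<forall>y\<in>topspace (top_of_set {0..1}). bop f (trunc y u) \<in> C" using bop_in f trunc_in u by blast
next
  fix t V \<epsilon> assume t: "t \<in> topspace (top_of_set {0..1::real})" and V: "openin X V" "e \<in> V" "(\<epsilon>::real) > 0"
  show "\<exists>W. openin (top_of_set {0..1}) W \<and> t \<in> W \<and> (\<forall>s\<in>W. bop f (trunc s u) \<in> nb (bop f (trunc t u)) V \<epsilon>)"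
  proof (intro exI[of _ "{0..1} \<inter> ball t \<epsilon>"] conjI ballI)
    show "openin (top_of_set {0..1}) ({0..1} \<inter> ball t \<epsilon>)" by (rule openin_open_Int) simp
    show "t \<in> {0..1} \<inter> ball t \<epsilon>" using t V by simp
    fix s assume s: "s \<in> {0..1} \<inter> ball t \<epsilon>"
    have gt: "bop f (trunc t u) \<in> C" and gs: "bop f (trunc s u) \<in> C" using bop_in f trunc_in u by blast+
    have sub: "{r\<in>J. op (ng (bop f (trunc t u) r)) (bop f (trunc s u) r) \<notin> V} \<subseteq> {min t s..<max t s}"
    proof
      fix r assume r: "r \<in> {r\<in>J. op (ng (bop f (trunc t u) r)) (bop f (trunc s u) r) \<notin> V}"
      show "r \<in> {min t s..<max t s}"
      proof (rule ccontr)
        assume "r \<notin> {min t s..<max t s}"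
        then have "(r < t) = (r < s)" by auto
        then have "bop f (trunc t u) r = bop f (trunc s u) r" using r by (simp add: bop_app trunc_def)
        moreover have "bop f (trunc s u) r \<in> G" using gs r by (simp add: carrier_iff)
        ultimately show False using r V(2) by (simp add: inv_left)
      qed
    qed
    have "measure lebesgue {r\<in>J. op (ng (bop f (trunc t u) r)) (bop f (trunc s u) r) \<notin> V} \<le> max t s - min t s"
      by (rule meas_le_ivl[OF meas2[OF gt gs, of "\<lambda>x y. op (ng x) y \<notin> V"] sub]) simp
    also have "\<dots> < \<epsilon>" using s by (auto simp: dist_real_def)
    finally show "bop f (trunc s u) \<in> nb (bop f (trunc t u)) V \<epsilon>" using nb_iff[OF gt] gs by simp
  qed
qed

lemma trunc0: "u \<in> C \<Longrightarrow> trunc 0 u = const_bullet e"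
  by (intro ext) (auto simp: trunc_def const_bullet_def)

lemma trunc1: "u \<in> C \<Longrightarrow> trunc 1 u = u"
  by (intro ext) (auto simp: trunc_def carrier_iff)

lemma pcomp:
  assumes f: "f \<in> C" and u: "u \<in> C" and N: "\<forall>t\<in>{0..1}. bop f (trunc t u) \<in> N"
  shows "path_component_of (subtopology T N) f (bop f u)"
  unfolding path_component_of_def
proof (intro exI[of _ "\<lambda>t. bop f (trunc t u)"] conjI)
  show "pathin (subtopology T N) (\<lambda>t. bop f (trunc t u))"
    unfolding pathin_def continuous_map_in_subtopology using path_cont[OF f u] N by auto
  show "bop f (trunc 0 u) = f" using trunc0[OF u] bop_zero[OF f] by simp
  show "bop f (trunc 1 u) = bop f u" using trunc1[OF u] by simp
qed

lemma nb_pc: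
  assumes f: "f \<in> C" and V: "openin X V" "e \<in> V" "\<epsilon> > 0"
  shows "path_connectedin T (nb f V \<epsilon>)"
  unfolding path_connectedin_def
proof
  show "nb f V \<epsilon> \<subseteq> topspace T" using nb_sub[OF f] topT by simp
  have key: "\<forall>k\<in>nb f V \<epsilon>. path_component_of (subtopology T (nb f V \<epsilon>)) f k"
  proof
    fix k assume "k \<in> nb f V \<epsilon>"
    then obtain u where u: "u \<in> C" "measure lebesgue {r\<in>J. u r \<notin> V} < \<epsilon>" "k = bop f u"
      unfolding bullet_O_def by blast
    have "\<forall>t\<in>{0..1}. bop f (trunc t u) \<in> nb f V \<epsilon>"
    proof
      fix t :: real
      have "{r\<in>J. trunc t u r \<notin> V} \<subseteq> {r\<in>J. u r \<notin> V}" using V(2) by (auto simp: trunc_def)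
      then have "measure lebesgue {r\<in>J. trunc t u r \<notin> V} \<le> measure lebesgue {r\<in>J. u r \<notin> V}"
        by (rule meas_mono[OF meas1[OF trunc_in[OF u(1)]] meas1[OF u(1)]])
      then have "trunc t u \<in> bullet_O G op V \<epsilon>" unfolding bullet_O_def using u trunc_in by fastforce
      then show "bop f (trunc t u) \<in> nb f V \<epsilon>" by blast
    qed
    then show "path_component_of (subtopology T (nb f V \<epsilon>)) f k" using pcomp[OF f u(1)] u(3) by blast
  qed
  show "path_connected_space (subtopology T (nb f V \<epsilon>))"
    unfolding path_connected_space_iff_path_component
  proof (intro ballI)
    fix x y assume "x \<in> topspace (subtopology T (nb f V \<epsilon>))" "y \<in> topspace (subtopology T (nb f V \<epsilon>))"
    then have "x \<in> nb f V \<epsilon>" "y \<in> nb f V \<epsilon>" by auto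
    then show "path_component_of (subtopology T (nb f V \<epsilon>)) x y"
      using key path_component_of_sym path_component_of_trans by metis
  qed
qed

lemma pcT: "path_connected_space T"
  unfolding path_connected_space_iff_path_component topT
proof (intro ballI)
  have key: "\<forall>k\<in>C. path_component_of T (const_bullet e) k"
  proof
    fix k assume k: "k \<in> C"
    have "bop (const_bullet e) k = k"
      by (rule carrier_eqI[OF bop_in[OF const_in[OF zero_in] k] k]) (use k in \<open>auto simp: bop_app const_bullet_def carrier_iff left_id\<close>)
    moreover have "path_component_of (subtopology T UNIV) (const_bullet e) (bop (const_bullet e) k)"
      using pcomp[OF const_in[OF zero_in] k] by blast
    ultimately show "path_component_of T (const_bullet e) k" by simp
  qed
  fix x y assume "x \<in> C" "y \<in> C"
  then show "path_component_of T x y" using key path_component_of_sym path_component_of_trans by metis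
qed

lemma lpcT: "locally_path_connected_space T"
  unfolding locally_path_connected_space_def neighbourhood_base_of
proof (intro allI impI)
  fix W x assume h: "openin T W \<and> x \<in> W"
  then have "Pt W" using openT by blast
  then have xC: "x \<in> C" and "\<exists>V \<epsilon>. openin X V \<and> e \<in> V \<and> \<epsilon> > 0 \<and> nb x V \<epsilon> \<subseteq> W" using h unfolding Pt_def by blast+
  then obtain V \<epsilon> where V: "openin X V" "e \<in> V" "\<epsilon> > 0" "nb x V \<epsilon> \<subseteq> W" by blast
  obtain U where U: "openin T U" "x \<in> U" "U \<subseteq> nb x V \<epsilon>" using L[OF xC V(1,2,3)] by blast
  show "\<exists>U V. openin T U \<and> path_connectedin T V \<and> x \<in> U \<and> U \<subseteq> V \<and> V \<subseteq> W"
    using U V nb_pc[OF xC V(1,2,3)] by blast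
qed

end


context tg begin

lemma closed_consts: "closedin T (const_bullet ` G)"
  unfolding closedin_def topT
proof
  show "const_bullet ` G \<subseteq> C" by (rule image_subsetI) (rule const_in)
  have "Pt (C - const_bullet ` G)" unfolding Pt_def
  proof (intro conjI ballI)
    show "C - const_bullet ` G \<subseteq> C" by blast
    fix f assume f: "f \<in> C - const_bullet ` G"
    then have fC: "f \<in> C" by blast
    have fG: "\<forall>r\<in>J. f r \<in> G" using fC by (auto simp: carrier_iff)
    have "\<exists>r1 r2. r1 \<in> J \<and> r2 \<in> J \<and> f r1 \<noteq> f r2"
    proof (rule ccontr)
      assume nex: "\<not> (\<exists>r1 r2. r1 \<in> J \<and> r2 \<in> J \<and> f r1 \<noteq> f r2)"
      have all: "\<forall>r\<in>J. f r = f 0"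
      proof
        fix r assume r: "r \<in> J"
        have "(0::real) \<in> J" by simp
        then show "f r = f 0" using nex r by blast
      qed
      have f0: "f 0 \<in> G" using fG by simp
      have eq: "f r = const_bullet (f 0) r" if r: "r \<in> J" for r
      proof -
        have "f r = f 0" using all r by blast
        then show ?thesis using r unfolding const_bullet_def by simp
      qed
      have "f = const_bullet (f 0)"
        by (rule carrier_eqI[OF fC const_in[OF f0]]) (rule eq)
      then have "f \<in> const_bullet ` G" using f0 by (rule image_eqI)
      then show False using f by blast
    qed
    then obtain r1 r2 where r12: "r1 \<in> J" "r2 \<in> J" "f r1 \<noteq> f r2" by blast
    define a where "a = f r1"
    define b where "b = f r2"
    have ab: "a \<in> G" "b \<in> G" "a \<noteq> b" using fG r12 unfolding a_def b_def by auto
    have "stepD f" using fC by (simp add: carrier_iff)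
    obtain t1 where t1: "r1 < t1" "t1 \<le> 1" "\<forall>r\<in>{r1..<t1}. f r = f r1" using stepD_piece[OF \<open>stepD f\<close> r12(1)] by blast
    obtain t2 where t2: "r2 < t2" "t2 \<le> 1" "\<forall>r\<in>{r2..<t2}. f r = f r2" using stepD_piece[OF \<open>stepD f\<close> r12(2)] by blast
    define \<Theta> where "\<Theta> = (\<lambda>p. op (ng (snd p)) (op (ng b) (op a (fst p))))"
    define c where "c = op (ng b) a"
    have cG: "c \<in> G" unfolding c_def using ab by (simp add: closed inv_in)
    have ce: "c \<noteq> e"
    proof
      assume "c = e"
      then have "op b e = a" using left_cancel2[of b a] ab unfolding c_def by simp
      then show False using right_id ab by simp
    qed
    have Thc: "\<Theta> (e,e) = c" unfolding \<Theta>_def c_def using ab by (simp add: inv_zero left_id right_id closed inv_in)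
    obtain W where W: "openin X W" "c \<in> W" "e \<notin> W"
      using t1X unfolding t1_space_def using cG ce zero_in topX by metis
    have "continuous_map (prod_topology X X) X \<Theta>" unfolding \<Theta>_def
      by (intro cont_op2 cont_inv1 cont_const continuous_map_fst continuous_map_snd inv_in ab)
    then obtain V1 where V1: "openin X V1" "e \<in> V1" "\<forall>v\<in>V1. \<forall>w\<in>V1. \<Theta> (v,w) \<in> W"
      using fp1[of \<Theta> W] W Thc by auto
    have V1G: "V1 \<subseteq> G" using V1(1) openin_subset topX by blast
    define \<delta> where "\<delta> = min (t1 - r1) (t2 - r2)"
    have dpos: "\<delta> > 0" unfolding \<delta>_def using t1 t2 by simp
    have "nb f V1 \<delta> \<subseteq> C - const_bullet ` G"
    proof
      fix k assume k: "k \<in> nb f V1 \<delta>"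
      then have kC: "k \<in> C" and km: "measure lebesgue {r\<in>J. op (ng (f r)) (k r) \<notin> V1} < \<delta>"
        using nb_iff[OF fC] by auto
      have "k \<notin> const_bullet ` G"
      proof
        assume "k \<in> const_bullet ` G"
        then obtain y where y: "y \<in> G" "k = const_bullet y" by blast
        have ex: "\<exists>r\<in>{s..<t}. op (ng (f r)) (k r) \<in> V1" if st: "s < t" "t - s \<ge> \<delta>" "{s..<t} \<subseteq> J" for s t
        proof (rule ccontr)
          assume "\<not> ?thesis"
          then have "{s..<t} \<subseteq> {r\<in>J. op (ng (f r)) (k r) \<notin> V1}" using st(3) by auto
          then have "t - s \<le> measure lebesgue {r\<in>J. op (ng (f r)) (k r) \<notin> V1}"
            using meas_ge_ivl[OF meas2[OF fC kC, of "\<lambda>x y. op (ng x) y \<notin> V1"], of s t] st by simp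
          then show False using km st by simp
        qed
        obtain p where p: "p \<in> {r1..<t1}" "op (ng (f p)) (k p) \<in> V1"
          using ex[of r1 t1] t1(1,2) r12(1) unfolding \<delta>_def by auto
        obtain q where q: "q \<in> {r2..<t2}" "op (ng (f q)) (k q) \<in> V1"
          using ex[of r2 t2] t2(1,2) r12(2) unfolding \<delta>_def by auto
        have pJ: "p \<in> J" and qJ: "q \<in> J" using p(1) q(1) r12(1,2) t1(1,2) t2(1,2) by auto
        have fp: "f p = a" using t1(3) p(1) unfolding a_def by blast
        have fq: "f q = b" using t2(3) q(1) unfolding b_def by blast
        have kp: "k p = y" "k q = y" using y(2) pJ qJ unfolding const_bullet_def by simp_all
        have v: "op (ng a) y \<in> V1" using p(2) fp kp by simp
        have w: "op (ng b) y \<in> V1" using q(2) fq kp by simp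
        have "\<Theta> (op (ng a) y, op (ng b) y) \<in> W" using V1(3) v w by blast
        moreover have "\<Theta> (op (ng a) y, op (ng b) y) = e"
          unfolding \<Theta>_def using ab y by (simp add: left_cancel2 inv_left closed inv_in)
        ultimately show False using W by simp
      qed
      then show "k \<in> C - const_bullet ` G" using kC by blast
    qed
    then show "\<exists>V \<epsilon>. openin X V \<and> e \<in> V \<and> \<epsilon> > 0 \<and> nb f V \<epsilon> \<subseteq> C - const_bullet ` G"
      using V1 dpos by blast
  qed
  then show "openin T (C - const_bullet ` G)" using openT by blast
qed

lemma cb_inj: "inj_on const_bullet G"
proof (rule inj_onI)
  fix x y assume "const_bullet x = const_bullet y"
  then have "const_bullet x 0 = const_bullet y 0" by simp
  then show "x = y" by (simp add: const_bullet_def)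
qed

lemma homeo: "homeomorphic_map X (subtopology T (const_bullet ` G)) const_bullet"
proof (rule bijective_open_imp_homeomorphic_map)
  show "continuous_map X (subtopology T (const_bullet ` G)) const_bullet"
    unfolding continuous_map_in_subtopology using cont_cb topX by simp
  show "const_bullet ` topspace X = topspace (subtopology T (const_bullet ` G))"
    using topX topT const_in by auto
  show "inj_on const_bullet (topspace X)" using cb_inj topX by simp
  show "open_map X (subtopology T (const_bullet ` G)) const_bullet"
    unfolding open_map_def
  proof (intro allI impI)
    fix U assume U: "openin X U"
    have UG: "U \<subseteq> G" using U openin_subset topX by blast
    have "\<forall>x\<in>U. \<exists>Ox. openin T Ox \<and> const_bullet x \<in> Ox \<and> Ox \<subseteq> nb (const_bullet x) {v \<in> topspace X. op x v \<in> U} 1"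
    proof
      fix x assume x: "x \<in> U"
      then have xG: "x \<in> G" using UG by blast
      have "continuous_map X X (\<lambda>v. op x v)" by (intro cont_op2 cont_const xG continuous_map_id[unfolded id_def])
      then have o: "openin X {v \<in> topspace X. op x v \<in> U}" using U by (rule openin_continuous_map_preimage)
      have "e \<in> {v \<in> topspace X. op x v \<in> U}" using x xG zero_in topX by (simp add: right_id)
      then show "\<exists>Ox. openin T Ox \<and> const_bullet x \<in> Ox \<and> Ox \<subseteq> nb (const_bullet x) {v \<in> topspace X. op x v \<in> U} 1"
        using L[OF const_in[OF xG] o, of 1] by simp
    qed
    then obtain Of where Of: "\<forall>x\<in>U. openin T (Of x) \<and> const_bullet x \<in> Of x \<and> Of x \<subseteq> nb (const_bullet x) {v \<in> topspace X. op x v \<in> U} 1"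
      by metis
    have "const_bullet ` U = (\<Union>x\<in>U. Of x) \<inter> const_bullet ` G"
    proof
      show "const_bullet ` U \<subseteq> (\<Union>x\<in>U. Of x) \<inter> const_bullet ` G" using Of UG by blast
      show "(\<Union>x\<in>U. Of x) \<inter> const_bullet ` G \<subseteq> const_bullet ` U"
      proof
        fix k assume "k \<in> (\<Union>x\<in>U. Of x) \<inter> const_bullet ` G"
        then obtain x y where xy: "x \<in> U" "k \<in> Of x" "y \<in> G" "k = const_bullet y" by blast
        have xG: "x \<in> G" using xy UG by blast
        have "k \<in> nb (const_bullet x) {v \<in> topspace X. op x v \<in> U} 1" using Of xy by blast
        then have m: "measure lebesgue {r\<in>J. op (ng (const_bullet x r)) (k r) \<notin> {v \<in> topspace X. op x v \<in> U}} < 1"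
          using nb_iff[OF const_in[OF xG]] by blast
        have "op (ng x) y \<in> {v \<in> topspace X. op x v \<in> U}"
        proof (rule ccontr)
          assume nin: "op (ng x) y \<notin> {v \<in> topspace X. op x v \<in> U}"
          have "{r\<in>J. op (ng (const_bullet x r)) (k r) \<notin> {v \<in> topspace X. op x v \<in> U}} = J"
            using nin xy(4) by (auto simp: const_bullet_def)
          then show False using m by simp
        qed
        then have "y \<in> U" using left_cancel2[OF xG xy(3)] by simp
        then show "k \<in> const_bullet ` U" using xy by blast
      qed
    qed
    moreover have "openin T (\<Union>x\<in>U. Of x)" using Of by blast
    ultimately show "openin (subtopology T (const_bullet ` G)) (const_bullet ` U)"
      unfolding openin_subtopology by blast
  qed
qed

end


context gyro begin

lemma sub_gyro:
  assumes H: "H \<subseteq> G" "e \<in> H" "\<forall>x\<in>H. \<forall>y\<in>H. op x y \<in> H" "\<forall>x\<in>H. ng x \<in> H"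
    "\<forall>a\<in>H. \<forall>b\<in>H. gyr a b ` H = H"
  shows "gyrogroup_with H op gyr"
proof -
  have ex1: "\<exists>!e'. e' \<in> H \<and> (\<forall>a\<in>H. op e' a = a \<and> op a e' = a)"
  proof (rule ex1I[of _ e])
    have "\<forall>a\<in>H. op e a = a \<and> op a e = a" using H(1) left_id right_id by (meson subsetD)
    then show "e \<in> H \<and> (\<forall>a\<in>H. op e a = a \<and> op a e = a)" using H(2) by simp
    fix e' assume h: "e' \<in> H \<and> (\<forall>a\<in>H. op e' a = a \<and> op a e' = a)"
    then have "op e' e = e" using H(2) by simp
    moreover have "op e' e = e'" using h H(1) right_id by (meson subsetD)
    ultimately show "e' = e" by simp
  qed
  have eH: "e \<in> H \<and> (\<forall>a\<in>H. op e a = a \<and> op a e = a)"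
  proof -
    have "\<forall>a\<in>H. op e a = a \<and> op a e = a" using H(1) left_id right_id by (meson subsetD)
    then show ?thesis using H(2) by simp
  qed
  have z: "gzero H op = e"
    by (subst gzero_def[of H op]) (rule the1_equality[OF ex1 eH])
  show ?thesis unfolding gyrogroup_with_def z
  proof (intro conjI ballI)
    show "\<And>x y. x \<in> H \<Longrightarrow> y \<in> H \<Longrightarrow> op x y \<in> H" using H(3) by blast
    show "\<exists>!e. e \<in> H \<and> (\<forall>a\<in>H. op e a = a \<and> op a e = a)" by (rule ex1)
    fix x assume x: "x \<in> H"
    show "\<exists>!y. y \<in> H \<and> op y x = e \<and> op x y = e"
    proof (rule ex1I[of _ "ng x"])
      have "x \<in> G" using x H(1) by blast
      then show "ng x \<in> H \<and> op (ng x) x = e \<and> op x (ng x) = e" using x H(4) inv_left inv_right by simp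
      fix y assume "y \<in> H \<and> op y x = e \<and> op x y = e"
      then show "y = ng x" using inv_unique[of x y] x H(1) by auto
    qed
  next
    fix x y assume x: "x \<in> H" and y: "y \<in> H"
    have a: "gyro_automorphism G op (gyr x y)" using aut x y H(1) by blast
    show "gyro_automorphism H op (gyr x y)" unfolding gyro_automorphism_def bij_betw_def
    proof (intro conjI ballI)
      show "inj_on (gyr x y) H" using gyr_inj[of x y] x y H(1) inj_on_subset by blast
      show "gyr x y ` H = H" using H(5) x y by blast
      fix a b assume "a \<in> H" "b \<in> H"
      then show "gyr x y (op a b) = op (gyr x y a) (gyr x y b)" using a H(1) unfolding gyro_automorphism_def by blast
    qed
  next
    fix x y z assume "x \<in> H" "y \<in> H" "z \<in> H"
    then show "op x (op y z) = op (op x y) (gyr x y z)" using assoc H(1) by blast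
  next
    fix x y z assume "x \<in> H" "y \<in> H" "z \<in> H"
    then show "gyr (op x y) y z = gyr x y z" using loop H(1) by blast
  qed
qed

end

lemma aut_cong:
  assumes "gyro_automorphism H op h" "\<forall>x\<in>H. h x = h' x" "\<forall>x\<in>H. \<forall>y\<in>H. op x y \<in> H"
  shows "gyro_automorphism H op h'"
  using assms unfolding gyro_automorphism_def
  by (simp add: bij_betw_cong[of H h h' H])

lemma pw3_in: "f \<in> bullet_carrier G \<Longrightarrow> g \<in> bullet_carrier G \<Longrightarrow> h \<in> bullet_carrier G
  \<Longrightarrow> (\<And>x y z. x \<in> G \<Longrightarrow> y \<in> G \<Longrightarrow> z \<in> G \<Longrightarrow> F x y z \<in> G)
  \<Longrightarrow> (\<lambda>r. if r \<in> J then F (f r) (g r) (h r) else undefined) \<in> bullet_carrier G"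
  unfolding carrier_iff
  by (auto intro!: stepD_cong[OF stepD_comp3[of f g h F]])

context tg begin

definition bgyr :: "(real \<Rightarrow> 'a) \<Rightarrow> (real \<Rightarrow> 'a) \<Rightarrow> (real \<Rightarrow> 'a) \<Rightarrow> (real \<Rightarrow> 'a)" where
  "bgyr f g h = (\<lambda>r. if r \<in> J then gyr (f r) (g r) (h r) else undefined)"

lemma bgyr_in: "f \<in> C \<Longrightarrow> g \<in> C \<Longrightarrow> h \<in> C \<Longrightarrow> bgyr f g h \<in> C"
  unfolding bgyr_def by (rule pw3_in) (auto intro: gyr_in)

lemma bgyr_out: "r \<notin> J \<Longrightarrow> bgyr f g h r = undefined" by (auto simp: bgyr_def)
lemma bop_out: "r \<notin> J \<Longrightarrow> bop f g r = undefined" by (auto simp: bullet_op_def)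

lemma CG: "f \<in> C \<Longrightarrow> r \<in> J \<Longrightarrow> f r \<in> G" by (simp add: carrier_iff)

lemma bzero_ex1: "\<exists>!E. E \<in> C \<and> (\<forall>a\<in>C. bop E a = a \<and> bop a E = a)"
proof (rule ex1I[of _ "const_bullet e"])
  have l: "bop (const_bullet e) a = a" if a: "a \<in> C" for a
    by (rule carrier_eqI[OF bop_in[OF const_in[OF zero_in] a] a]) (simp add: bop_app const_bullet_def left_id CG[OF a])
  show "const_bullet e \<in> C \<and> (\<forall>a\<in>C. bop (const_bullet e) a = a \<and> bop a (const_bullet e) = a)"
    using l bop_zero const_in[OF zero_in] by blast
  fix E assume E: "E \<in> C \<and> (\<forall>a\<in>C. bop E a = a \<and> bop a E = a)"
  then have "bop E (const_bullet e) = const_bullet e" using const_in[OF zero_in] by blast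
  moreover have "bop E (const_bullet e) = E" using bop_zero E by blast
  ultimately show "E = const_bullet e" by simp
qed

lemma bzero: "gzero C bop = const_bullet e"
proof -
  have l: "bop (const_bullet e) a = a" if a: "a \<in> C" for a
    by (rule carrier_eqI[OF bop_in[OF const_in[OF zero_in] a] a]) (simp add: bop_app const_bullet_def left_id CG[OF a])
  have p: "const_bullet e \<in> C \<and> (\<forall>a\<in>C. bop (const_bullet e) a = a \<and> bop a (const_bullet e) = a)"
    using l bop_zero const_in[OF zero_in] by blast
  show ?thesis
    by (subst gzero_def[of C bop]) (rule the1_equality[OF bzero_ex1], rule p)
qed

lemma binv_props: "f \<in> C \<Longrightarrow> bop (binv f) f = const_bullet e \<and> bop f (binv f) = const_bullet e"
proof -
  assume f: "f \<in> C"
  have "bop (binv f) f = const_bullet e"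
    by (intro ext) (simp add: bullet_op_def binv_def pw_def const_bullet_def inv_left CG[OF f])
  moreover have "bop f (binv f) = const_bullet e"
    by (intro ext) (simp add: bullet_op_def binv_def pw_def const_bullet_def inv_right CG[OF f])
  ultimately show ?thesis by simp
qed

lemma bgw: "gyrogroup_with C bop bgyr"
  unfolding gyrogroup_with_def bzero
proof (intro conjI ballI)
  show "\<And>x y. x \<in> C \<Longrightarrow> y \<in> C \<Longrightarrow> bop x y \<in> C" by (rule bop_in)
  show "\<exists>!e. e \<in> C \<and> (\<forall>a\<in>C. bop e a = a \<and> bop a e = a)" by (rule bzero_ex1)
next
  fix x assume x: "x \<in> C"
  show "\<exists>!y. y \<in> C \<and> bop y x = const_bullet e \<and> bop x y = const_bullet e"
  proof (rule ex1I[of _ "binv x"])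
    show "binv x \<in> C \<and> bop (binv x) x = const_bullet e \<and> bop x (binv x) = const_bullet e"
      using binv_in[OF x] binv_props[OF x] by blast
    fix y assume y: "y \<in> C \<and> bop y x = const_bullet e \<and> bop x y = const_bullet e"
    show "y = binv x"
    proof (rule carrier_eqI[of y G "binv x" G])
      show "y \<in> C" "binv x \<in> C" using y binv_in[OF x] by auto
      fix r assume r: "r \<in> J"
      have "bop y x r = e" "bop x y r = e" using y r by (auto simp: const_bullet_def)
      then have "op (y r) (x r) = e" "op (x r) (y r) = e" using r by (auto simp: bop_app)
      then have "ng (x r) = y r" using inv_unique CG[OF x r] CG[of y r] y r by blast
      then show "y r = binv x r" using r by (simp add: binv_def pw_def)
    qed
  qed
next
  fix x y assume x: "x \<in> C" and y: "y \<in> C"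
  show "gyro_automorphism C bop (bgyr x y)" unfolding gyro_automorphism_def bij_betw_def
  proof (intro conjI ballI)
    show "inj_on (bgyr x y) C"
    proof (rule inj_onI)
      fix h1 h2 assume h: "h1 \<in> C" "h2 \<in> C" "bgyr x y h1 = bgyr x y h2"
      show "h1 = h2"
      proof (rule carrier_eqI[OF h(1,2)])
        fix r assume r: "r \<in> J"
        have "gyr (x r) (y r) (h1 r) = gyr (x r) (y r) (h2 r)" using fun_cong[OF h(3), of r] r by (simp add: bgyr_def)
        then show "h1 r = h2 r" using gyr_inj[OF CG[OF x r] CG[OF y r]] CG[OF h(1) r] CG[OF h(2) r] unfolding inj_on_def by blast
      qed
    qed
    show "bgyr x y ` C = C"
    proof
      show "bgyr x y ` C \<subseteq> C" using bgyr_in x y by blast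
      show "C \<subseteq> bgyr x y ` C"
      proof
        fix k assume k: "k \<in> C"
        have im: "gyr a b ` G = G" if "a \<in> G" "b \<in> G" for a b
          using aut[OF that] unfolding gyro_automorphism_def bij_betw_def by blast
        define h where "h = (\<lambda>r. if r \<in> J then inv_into G (gyr (x r) (y r)) (k r) else undefined)"
        have hC: "h \<in> C" unfolding h_def
          by (rule pw3_in[OF x y k]) (use im in \<open>metis inv_into_into\<close>)
        have "bgyr x y h = k"
        proof (rule carrier_eqI[OF bgyr_in[OF x y hC] k])
          fix r assume r: "r \<in> J"
          have "k r \<in> gyr (x r) (y r) ` G" using im[OF CG[OF x r] CG[OF y r]] CG[OF k r] by simp
          then show "bgyr x y h r = k r" using r by (simp add: bgyr_def h_def f_inv_into_f)
        qed
        then show "k \<in> bgyr x y ` C" using hC by blast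
      qed
    qed
  next
    fix a b assume a: "a \<in> C" and b: "b \<in> C"
    show "bgyr x y (bop a b) = bop (bgyr x y a) (bgyr x y b)"
    proof (rule ext)
      fix r show "bgyr x y (bop a b) r = bop (bgyr x y a) (bgyr x y b) r"
      proof (cases "r \<in> J")
        case True
        have "gyr (x r) (y r) (op (a r) (b r)) = op (gyr (x r) (y r) (a r)) (gyr (x r) (y r) (b r))"
          using aut[OF CG[OF x True] CG[OF y True]] CG[OF a True] CG[OF b True] unfolding gyro_automorphism_def by blast
        then show ?thesis using True by (simp add: bgyr_def bop_app)
      qed (simp add: bgyr_out bop_out)
    qed
  qed
next
  fix x y z assume x: "x \<in> C" and y: "y \<in> C" and z: "z \<in> C"
  show "bop x (bop y z) = bop (bop x y) (bgyr x y z)"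
  proof (rule ext)
    fix r show "bop x (bop y z) r = bop (bop x y) (bgyr x y z) r"
    proof (cases "r \<in> J")
      case True
      then show ?thesis using assoc[OF CG[OF x True] CG[OF y True] CG[OF z True]] by (simp add: bgyr_def bop_app)
    qed (simp add: bgyr_out bop_out)
  qed
next
  fix x y z assume x: "x \<in> C" and y: "y \<in> C" and z: "z \<in> C"
  show "bgyr (bop x y) y z = bgyr x y z"
  proof (rule ext)
    fix r show "bgyr (bop x y) y z r = bgyr x y z r"
    proof (cases "r \<in> J")
      case True
      then show ?thesis using loop[OF CG[OF x True] CG[OF y True] CG[OF z True]] by (simp add: bgyr_def bop_app)
    qed (simp add: bgyr_out bop_out)
  qed
qed

lemma binv_eq: "f \<in> C \<Longrightarrow> ginv C bop f = binv f"
proof -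
  assume f: "f \<in> C"
  interpret B: gyro C bop bgyr using bgw by (unfold_locales)
  show ?thesis using B.inv_unique[OF f binv_in[OF f]] binv_props[OF f] bzero by simp
qed

lemma tgC: "topological_gyrogroup C bop T"
  unfolding topological_gyrogroup_def
proof (intro conjI)
  show "gyrogroup C bop" unfolding gyrogroup_def using bgw by blast
  show "topspace T = C" by (rule topT)
  show "t1_space T" by (rule t1T)
  show "continuous_map (prod_topology T T) T (\<lambda>p. bop (fst p) (snd p))" by (rule cont_bop)
  show "continuous_map T T (ginv C bop)"
    by (rule continuous_map_eq[OF cont_binv]) (simp add: topT binv_eq)
qed

lemma cb_op: "x \<in> G \<Longrightarrow> y \<in> G \<Longrightarrow> const_bullet (op x y) = bop (const_bullet x) (const_bullet y)"
  by (intro ext) (simp add: bullet_op_def const_bullet_def)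

lemma subC: "subgyrogroup (const_bullet ` G) C bop"
proof -
  interpret B: gyro C bop bgyr using bgw by (unfold_locales)
  let ?H = "const_bullet ` G"
  have HC: "?H \<subseteq> C" by (rule image_subsetI) (rule const_in)
  have Hcl: "\<forall>x\<in>?H. \<forall>y\<in>?H. bop x y \<in> ?H"
  proof (intro ballI)
    fix x y assume "x \<in> ?H" "y \<in> ?H"
    then obtain a b where "a \<in> G" "b \<in> G" "x = const_bullet a" "y = const_bullet b" by blast
    then have "bop x y = const_bullet (op a b)" "op a b \<in> G" using cb_op[of a b] closed by auto
    then show "bop x y \<in> ?H" by simp
  qed
  have bgH: "bgyr (const_bullet a) (const_bullet b) (const_bullet c) = const_bullet (gyr a b c)" for a b c
    by (intro ext) (simp add: bgyr_def const_bullet_def)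
  have wH: "gyrogroup_with ?H bop bgyr"
  proof (rule B.sub_gyro)
    show "?H \<subseteq> C" by (rule HC)
    show "gzero C bop \<in> ?H" using bzero zero_in by simp
    show "\<forall>x\<in>?H. \<forall>y\<in>?H. bop x y \<in> ?H" by (rule Hcl)
    show "\<forall>x\<in>?H. ginv C bop x \<in> ?H"
    proof
      fix x assume "x \<in> ?H"
      then obtain a where a: "a \<in> G" "x = const_bullet a" by blast
      have "binv x = const_bullet (ng a)" using a by (intro ext) (simp add: binv_def pw_def const_bullet_def)
      moreover have "ginv C bop x = binv x" using binv_eq const_in[OF a(1)] a(2) by simp
      moreover have "ng a \<in> G" using inv_in a(1) by simp
      ultimately show "ginv C bop x \<in> ?H" by simp
    qed
    show "\<forall>x\<in>?H. \<forall>y\<in>?H. bgyr x y ` ?H = ?H"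
    proof (intro ballI)
      fix x y assume "x \<in> ?H" "y \<in> ?H"
      then obtain a b where ab: "a \<in> G" "b \<in> G" "x = const_bullet a" "y = const_bullet b" by blast
      have im: "gyr a b ` G = G" using aut[OF ab(1,2)] unfolding gyro_automorphism_def bij_betw_def by blast
      have "bgyr x y ` ?H = const_bullet ` (gyr a b ` G)" using ab bgH by (auto simp: image_image)
      then show "bgyr x y ` ?H = ?H" using im by simp
    qed
  qed
  interpret H: gyro ?H bop bgyr using wH by (unfold_locales)
  show ?thesis unfolding subgyrogroup_def
  proof (intro conjI allI impI ballI)
    show "?H \<noteq> {}" using zero_in by blast
    show "?H \<subseteq> C" by (rule HC)
    show "gyrogroup ?H bop" unfolding gyrogroup_def using wH by blast
    fix gyr' a b assume g': "gyrogroup_with C bop gyr'" and a: "a \<in> ?H" and b: "b \<in> ?H"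
    interpret G': gyro C bop gyr' using g' by (unfold_locales)
    have aC: "a \<in> C" and bC: "b \<in> C" using a b HC by auto
    have "\<forall>c\<in>?H. bgyr a b c = gyr' a b c"
    proof
      fix c assume "c \<in> ?H"
      then have cC: "c \<in> C" using HC by blast
      show "bgyr a b c = gyr' a b c" using B.gyr_formula[OF aC bC cC] G'.gyr_formula[OF aC bC cC] by simp
    qed
    then show "gyro_automorphism ?H bop (gyr' a b)"
      using aut_cong[OF H.aut[OF a b]] Hcl by blast
  qed
qed

end

theorem mainTheorem5:
  fixes G :: "'a set" and op :: "'a \<Rightarrow> 'a \<Rightarrow> 'a" and X :: "'a topology"
  assumes "topological_gyrogroup G op X"
  shows "const_bullet ` G \<subseteq> bullet_carrier G
    \<and> inj_on const_bullet G
    \<and> (\<forall>x\<in>G. \<forall>y\<in>G. const_bullet (op x y) = bullet_op op (const_bullet x) (const_bullet y))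
    \<and> homeomorphic_map X (subtopology (bullet_topology G op X) (const_bullet ` G)) const_bullet
    \<and> topological_gyrogroup (bullet_carrier G) (bullet_op op) (bullet_topology G op X)
    \<and> path_connected_space (bullet_topology G op X)
    \<and> locally_path_connected_space (bullet_topology G op X)
    \<and> closedin (bullet_topology G op X) (const_bullet ` G)
    \<and> subgyrogroup (const_bullet ` G) (bullet_carrier G) (bullet_op op)"
proof -
  obtain gyr where gw: "gyrogroup_with G op gyr"
    using assms unfolding topological_gyrogroup_def gyrogroup_def by blast
  interpret tg G op gyr X
    by (intro tg.intro gyro.intro tg_axioms.intro gw assms)
  have s: "const_bullet ` G \<subseteq> bullet_carrier G" by (rule image_subsetI) (rule const_in)
  show ?thesis
    using s cb_inj cb_op homeo tgC pcT lpcT closed_consts subC by blast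
qed


end
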